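(* Let $P$ be a transition kernel on a space with countably generated $\sigma$-algebra, reversible with respect to a probability measure $\mu$ and nonnegative definite (i.e. $(Pf,f)_\mu\ge0$ for all $f\in L_2(\mu)$). Let $\{A_1,\dots,A_J\}$ be a partition of the state space with $\mu(A_j)>0$ for all $j$. Then $$\tfrac12\,\mathrm{Gap}(\bar P)\min_{j=1,\dots,J}\mathrm{Gap}(P|_{A_j})\;\le\;\mathrm{Gap}(P)\;\le\;\mathrm{Gap}(\bar P).$$
   Context: Spectral gap of a $\mu$-reversible kernel: $\mathrm{Gap}(P)=\inf\{(f,(I-P)f)_\mu/\mathrm{Var}_\mu(f): f\in L_2(\mu),\ \mathrm{Var}_\mu(f)>0\}$, with $(f,g)_\mu=\int fg\,d\mu$. Restriction: $P|_A(x,B)=P(x,B)+\mathbf{1}_B(x)P(x,A^c)$ for $x\in A$, $B\subset A$, which is reversible w.r.t. $\mu$ restricted and normalized to $A$. Projection matrix: $\bar P(i,j)=\frac{1}{\mu(A_i)}\int_{A_i}\int_{A_j}P(x,dy)\mu(dx)$ on $\{1,\dots,J\}$, reversible w.r.t. $(\mu(A_j))_j$. *)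

theory Defs
  imports "HOL-Probability.Probability"
begin

definition countably_generated :: "'a measure \<Rightarrow> bool" where
  "countably_generated M \<longleftrightarrow>
     (\<exists>G. countable G \<and> G \<subseteq> Pow (space M) \<and> sets M = sigma_sets (space M) G)"

definition markov_kernel :: "'a measure \<Rightarrow> ('a \<Rightarrow> 'a measure) \<Rightarrow> bool" where
  "markov_kernel M K \<longleftrightarrow> K \<in> M \<rightarrow>\<^sub>M prob_algebra M"

definition reversible :: "'a measure \<Rightarrow> ('a \<Rightarrow> 'a measure) \<Rightarrow> bool" where
  "reversible M K \<longleftrightarrow> (\<forall>A\<in>sets M. \<forall>B\<in>sets M.
     (LINT x:A|M. measure (K x) B) = (LINT x:B|M. measure (K x) A))"

definition L2 :: "'a measure \<Rightarrow> ('a \<Rightarrow> real) set" where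
  "L2 M = {f. f \<in> borel_measurable M \<and> integrable M (\<lambda>x. (f x)\<^sup>2)}"

definition inner_mu :: "'a measure \<Rightarrow> ('a \<Rightarrow> real) \<Rightarrow> ('a \<Rightarrow> real) \<Rightarrow> real" where
  "inner_mu M f g = (LINT x|M. f x * g x)"

definition kernel_apply :: "('a \<Rightarrow> 'a measure) \<Rightarrow> ('a \<Rightarrow> real) \<Rightarrow> 'a \<Rightarrow> real" where
  "kernel_apply K f x = (LINT y|K x. f y)"

definition var_mu :: "'a measure \<Rightarrow> ('a \<Rightarrow> real) \<Rightarrow> real" where
  "var_mu M f = inner_mu M f f - (LINT x|M. f x)\<^sup>2"

definition nonneg_definite :: "'a measure \<Rightarrow> ('a \<Rightarrow> 'a measure) \<Rightarrow> bool" where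
  "nonneg_definite M K \<longleftrightarrow> (\<forall>f\<in>L2 M. inner_mu M (kernel_apply K f) f \<ge> 0)"

(* Spectral gap. Convention: if no f in L2 has positive variance (mu is a point mass),
   the infimum is over the empty set; we then set Gap = 1. *)
definition gap :: "'a measure \<Rightarrow> ('a \<Rightarrow> 'a measure) \<Rightarrow> real" where
  "gap M K = (let S = {(inner_mu M f f - inner_mu M f (kernel_apply K f)) / var_mu M f
                       | f. f \<in> L2 M \<and> var_mu M f > 0}
              in if S = {} then 1 else Inf S)"

(* It is regarded as a kernel on the whole space (outside A it is the identity, which is
   irrelevant since the normalised restriction of mu, uniform_measure M A, vanishes there). *)
definition restrict_kernel :: "'a measure \<Rightarrow> ('a \<Rightarrow> 'a measure) \<Rightarrow> 'a set \<Rightarrow> 'a \<Rightarrow> 'a measure" where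
  "restrict_kernel M K A x = measure_of (space M) (sets M)
     (\<lambda>B. if x \<in> A then emeasure (K x) (B \<inter> A) + indicator B x * emeasure (K x) (space M - A)
          else indicator B x)"

definition proj_matrix :: "'a measure \<Rightarrow> ('a \<Rightarrow> 'a measure) \<Rightarrow> (nat \<Rightarrow> 'a set) \<Rightarrow> nat \<Rightarrow> nat \<Rightarrow> real" where
  "proj_matrix M K A i j = (LINT x:A i|M. measure (K x) (A j)) / measure M (A i)"

definition proj_kernel :: "'a measure \<Rightarrow> ('a \<Rightarrow> 'a measure) \<Rightarrow> (nat \<Rightarrow> 'a set) \<Rightarrow> nat \<Rightarrow> nat \<Rightarrow> nat measure" where
  "proj_kernel M K A J i = point_measure {..<J} (\<lambda>j. ennreal (proj_matrix M K A i j))"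

definition proj_measure :: "'a measure \<Rightarrow> (nat \<Rightarrow> 'a set) \<Rightarrow> nat \<Rightarrow> nat measure" where
  "proj_measure M A J = point_measure {..<J} (\<lambda>j. emeasure M (A j))"

end

theory Submission
  imports Defs
begin


definition EE where "EE N Q f = inner_mu N f f - inner_mu N f (kernel_apply Q f)"

lemma gap_props:
  assumes H: "\<And>f. f \<in> L2 N \<Longrightarrow> 0 \<le> EE N Q f \<and> EE N Q f \<le> var_mu N f"
  shows "0 \<le> gap N Q" "gap N Q \<le> 1"
    "\<And>f. f \<in> L2 N \<Longrightarrow> var_mu N f > 0 \<Longrightarrow> gap N Q \<le> EE N Q f / var_mu N f"
    "\<And>f. f \<in> L2 N \<Longrightarrow> gap N Q * var_mu N f \<le> EE N Q f"
proof -
  define S where "S = {(inner_mu N f f - inner_mu N f (kernel_apply Q f)) / var_mu N f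
                       | f. f \<in> L2 N \<and> var_mu N f > 0}"
  have gS: "gap N Q = (if S = {} then 1 else Inf S)" unfolding gap_def S_def Let_def by simp
  have Sb: "s \<in> S \<Longrightarrow> 0 \<le> s \<and> s \<le> 1" for s
  proof -
    assume "s \<in> S"
    then obtain f where f: "f \<in> L2 N" "var_mu N f > 0" and s: "s = EE N Q f / var_mu N f"
      unfolding S_def EE_def by blast
    show ?thesis using H[OF f(1)] f(2) unfolding s by (simp add: divide_le_eq_1)
  qed
  have bdd: "bdd_below S" unfolding bdd_below_def using Sb by blast
  show g0: "0 \<le> gap N Q"
  proof (cases "S = {}")
    case False then show ?thesis using Sb by (simp add: gS cInf_greatest)
  qed (simp add: gS)
  show "gap N Q \<le> 1"
  proof (cases "S = {}")
    case False
    then obtain s where "s \<in> S" by blast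
    then have "Inf S \<le> s" "s \<le> 1" using bdd Sb by (auto intro: cInf_lower)
    then show ?thesis using False by (simp add: gS)
  qed (simp add: gS)
  show le: "gap N Q \<le> EE N Q f / var_mu N f" if f: "f \<in> L2 N" "var_mu N f > 0" for f
  proof -
    have s: "EE N Q f / var_mu N f \<in> S" using f unfolding S_def EE_def by blast
    then have "S \<noteq> {}" by blast
    then show ?thesis using cInf_lower[OF s bdd] by (simp add: gS)
  qed
  show "gap N Q * var_mu N f \<le> EE N Q f" if f: "f \<in> L2 N" for f
  proof (cases "var_mu N f > 0")
    case True
    then show ?thesis using le[OF f True] by (simp add: le_divide_eq)
  next
    case False
    then have "var_mu N f = 0" using H[OF f] by linarith
    then show ?thesis using H[OF f] by simp
  qed
qed

lemma L2_diff_const_gen: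
  assumes N: "prob_space N" and f: "f \<in> L2 N" shows "(\<lambda>x. f x - c) \<in> L2 N"
proof -
  interpret P: prob_space N by (rule N)
  have fm: "f \<in> borel_measurable N" and f2: "integrable N (\<lambda>x. (f x)\<^sup>2)" using f unfolding L2_def by auto
  have fi: "integrable N f" using P.square_integrable_imp_integrable[OF fm f2] .
  have "integrable N (\<lambda>x. (f x)\<^sup>2 - 2 * c * f x + c\<^sup>2)"
    using f2 fi by simp
  then show ?thesis using fm unfolding L2_def by (simp add: power2_diff algebra_simps)
qed

lemma inner_center:
  assumes N: "prob_space N" and f: "f \<in> L2 N"
  shows "inner_mu N (\<lambda>x. f x - integral\<^sup>L N f) (\<lambda>x. f x - integral\<^sup>L N f) = var_mu N f"
proof -
  interpret P: prob_space N by (rule N)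
  have fm: "f \<in> borel_measurable N" and f2: "integrable N (\<lambda>x. (f x)\<^sup>2)" using f unfolding L2_def by auto
  have fi: "integrable N f" using P.square_integrable_imp_integrable[OF fm f2] .
  define c where "c = integral\<^sup>L N f"
  have "inner_mu N (\<lambda>x. f x - c) (\<lambda>x. f x - c) = (\<integral>x. (f x)\<^sup>2 - 2 * c * f x + c\<^sup>2 \<partial>N)"
    unfolding inner_mu_def by (simp add: power2_eq_square algebra_simps)
  also have "\<dots> = (\<integral>x. (f x)\<^sup>2 \<partial>N) - 2 * c * c + c\<^sup>2"
    using f2 fi by (simp add: c_def P.prob_space)
  also have "\<dots> = var_mu N f"
    unfolding var_mu_def inner_mu_def c_def by (simp add: power2_eq_square)
  finally show ?thesis unfolding c_def .
qed

lemma final_alg: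
  fixes \<gamma> g a b e d dh EG :: real
  assumes "0 \<le> \<gamma>" "\<gamma> \<le> 1" "0 \<le> g" "g \<le> 1" "0 \<le> d" "0 \<le> dh" "0 \<le> e"
    and F2: "e + dh \<le> a" and F3: "\<gamma> * b \<le> EG" and F4: "g * a \<le> e"
    and F5: "\<And>t. t * (1 - t) * EG \<le> (1 - t) * d + t * dh"
  shows "\<gamma> * g / 2 * (a + b) \<le> e + d"
proof (cases "g < 1")
  case True
  have a0: "0 \<le> a" using assms by linarith
  have p: "0 \<le> g * (1 - g)" using assms by simp
  have 1: "g * (1 - g) * EG \<le> (1 - g) * d + g * dh" using F5[of g] by (simp add: mult.commute)
  have 2: "g * (1 - g) * (\<gamma> * b) \<le> g * (1 - g) * EG" using mult_left_mono[OF F3 p] .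
  have 3: "g * dh \<le> g * (a - e)" using F2 assms by (intro mult_left_mono) auto
  have 4: "g * (a - e) \<le> (1 - g) * e" using F4 by (simp add: algebra_simps)
  have 5: "(1 - g) * (\<gamma> * (g * a)) \<le> (1 - g) * (1 * (g * a))"
    using assms True a0 by (intro mult_left_mono mult_right_mono) auto
  have 6: "(1 - g) * (g * a) \<le> (1 - g) * e" using F4 True by (intro mult_left_mono) auto
  have 7: "0 \<le> (1 - g) * d" using assms by simp
  have "(1 - g) * (\<gamma> * g * (a + b)) = (1 - g) * (\<gamma> * (g * a)) + g * (1 - g) * (\<gamma> * b)"
    by (simp add: algebra_simps)
  also have "\<dots> \<le> (1 - g) * e + ((1 - g) * d + g * dh)" using 1 2 5 6 by linarith
  also have "\<dots> \<le> (1 - g) * e + (1 - g) * d + (1 - g) * e" using 3 4 by linarith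
  also have "\<dots> \<le> (1 - g) * (2 * (e + d))" using 7 by (simp add: algebra_simps)
  finally have "(1 - g) * (\<gamma> * g * (a + b)) \<le> (1 - g) * (2 * (e + d))" .
  then have "\<gamma> * g * (a + b) \<le> 2 * (e + d)" using True by simp
  then show ?thesis by simp
next
  case False
  then have g1: "g = 1" using assms by simp
  have "dh = 0" using F2 F4 g1 assms by simp
  have "1/2 * (1 - 1/2) * EG \<le> (1 - 1/2) * d + 1/2 * dh" by (rule F5)
  then have "EG \<le> 2 * d" using \<open>dh = 0\<close> by simp
  have a0: "0 \<le> a" using assms by linarith
  have "\<gamma> * a \<le> a" using a0 assms mult_right_mono[of \<gamma> 1 a] by simp
  moreover have "a \<le> e" using F4 g1 by simp
  ultimately have s: "\<gamma> * a + \<gamma> * b \<le> e + 2 * d" using F3 \<open>EG \<le> 2 * d\<close> by linarith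
  have "\<gamma> * g * (a + b) = \<gamma> * a + \<gamma> * b" using g1 by (simp add: algebra_simps)
  also have "\<dots> \<le> 2 * (e + d)" using assms(7) by (intro order_trans[OF s]) simp
  finally have "\<gamma> * g * (a + b) \<le> 2 * (e + d)" .
  then show ?thesis by simp
qed

lemma gap_ge:
  assumes c1: "c \<le> 1" and H: "\<And>f. f \<in> L2 N \<Longrightarrow> var_mu N f > 0 \<Longrightarrow> c * var_mu N f \<le> EE N Q f"
  shows "c \<le> gap N Q"
proof -
  define S where "S = {(inner_mu N f f - inner_mu N f (kernel_apply Q f)) / var_mu N f
                       | f. f \<in> L2 N \<and> var_mu N f > 0}"
  have gS: "gap N Q = (if S = {} then 1 else Inf S)" unfolding gap_def S_def Let_def by simp
  show ?thesis
  proof (cases "S = {}")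
    case False
    have "c \<le> Inf S"
    proof (rule cInf_greatest[OF False])
      fix s assume "s \<in> S"
      then obtain f where f: "f \<in> L2 N" "var_mu N f > 0" and s: "s = EE N Q f / var_mu N f"
        unfolding S_def EE_def by blast
      show "c \<le> s" using H[OF f] f(2) unfolding s by (simp add: le_divide_eq)
    qed
    then show ?thesis using False by (simp add: gS)
  qed (simp add: gS c1)
qed

locale chain =
  fixes M :: "'a measure" and K :: "'a \<Rightarrow> 'a measure"
  assumes prob: "prob_space M" and mk: "markov_kernel M K"
begin

lemma K_meas[measurable]: "K \<in> M \<rightarrow>\<^sub>M subprob_algebra M"
  using mk unfolding markov_kernel_def by (rule measurable_prob_algebraD)

lemma K_prob: "x \<in> space M \<Longrightarrow> prob_space (K x)"
  using mk unfolding markov_kernel_def by (auto dest: measurable_space simp: space_prob_algebra)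

lemma K_sets: "x \<in> space M \<Longrightarrow> sets (K x) = sets M"
  using mk unfolding markov_kernel_def by (auto dest: measurable_space simp: space_prob_algebra)

lemma K_space: "x \<in> space M \<Longrightarrow> space (K x) = space M"
  using K_sets sets_eq_imp_space_eq by blast

definition nu where "nu = M \<bind> (\<lambda>x. distr (K x) (M \<Otimes>\<^sub>M M) (Pair x))"

lemma Kd_meas[measurable]: "(\<lambda>x. distr (K x) (M \<Otimes>\<^sub>M M) (Pair x)) \<in> M \<rightarrow>\<^sub>M subprob_algebra (M \<Otimes>\<^sub>M M)"
  by (rule measurable_distr2[where M=M]) (simp_all add: case_prod_beta' K_meas)

lemma sets_nu[measurable_cong]: "sets nu = sets (M \<Otimes>\<^sub>M M)"
  unfolding nu_def using prob_space.not_empty[OF prob]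
  by (subst sets_bind[where N="M \<Otimes>\<^sub>M M"]) (auto intro: measurable_space[OF Kd_meas] simp: space_subprob_algebra)

lemma nu_prob: "prob_space nu"
  unfolding nu_def
  apply (rule prob_space.prob_space_bind[OF prob, where S="M \<Otimes>\<^sub>M M"])
   apply (rule AE_I2) apply (rule prob_space.prob_space_distr) apply (simp add: K_prob) 
   apply (subst measurable_cong_sets[OF K_sets refl], assumption) apply simp
  apply (rule Kd_meas)
  done

lemma nu_fin: "emeasure nu X \<noteq> \<top>"
proof -
  interpret prob_space nu by (rule nu_prob)
  show ?thesis by (rule emeasure_finite)
qed

lemma nn_integral_nu:
  assumes [measurable]: "F \<in> borel_measurable (M \<Otimes>\<^sub>M M)"
  shows "(\<integral>\<^sup>+z. F z \<partial>nu) = (\<integral>\<^sup>+x. \<integral>\<^sup>+y. F (x,y) \<partial>K x \<partial>M)"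
  unfolding nu_def
  apply (subst nn_integral_bind[where B="M \<Otimes>\<^sub>M M"])
    apply simp apply (rule Kd_meas)
  apply (rule nn_integral_cong)
  apply (subst nn_integral_distr)
    apply (subst measurable_cong_sets[OF K_sets refl], assumption) apply simp
   apply simp
  apply simp
  done

lemma measK_meas[measurable]: "B \<in> sets M \<Longrightarrow> (\<lambda>x. measure (K x) B) \<in> borel_measurable M"
  using measure_measurable_subprob_algebra2[of M "\<lambda>x. B" M K] by simp

lemma emeasure_K: "x \<in> space M \<Longrightarrow> emeasure (K x) B = ennreal (measure (K x) B)"
proof -
  assume "x \<in> space M"
  then interpret Q: prob_space "K x" by (rule K_prob)
  show ?thesis by (rule Q.emeasure_eq_measure)
qed

lemma emeasure_nu_rect:
  assumes A: "A \<in> sets M" and B: "B \<in> sets M"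
  shows "emeasure nu (A \<times> B) = ennreal (LINT x:A|M. measure (K x) B)"
proof -
  interpret P: prob_space M by (rule prob)
  have "emeasure nu (A \<times> B) = (\<integral>\<^sup>+z. indicator (A \<times> B) z \<partial>nu)"
    using A B by (simp add: sets_nu)
  also have "\<dots> = (\<integral>\<^sup>+x. \<integral>\<^sup>+y. indicator (A \<times> B) (x,y) \<partial>K x \<partial>M)"
    using A B by (subst nn_integral_nu) auto
  also have "\<dots> = (\<integral>\<^sup>+x. ennreal (indicator A x * measure (K x) B) \<partial>M)"
  proof (rule nn_integral_cong)
    fix x assume x: "x \<in> space M"
    have "(\<integral>\<^sup>+y. indicator (A \<times> B) (x,y) \<partial>K x) = (\<integral>\<^sup>+y. indicator A x * indicator B y \<partial>K x)"
      by (auto intro!: nn_integral_cong simp: indicator_def)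
    also have "\<dots> = indicator A x * emeasure (K x) B"
      using B x by (subst nn_integral_cmult_indicator) (auto simp: K_sets)
    finally show "(\<integral>\<^sup>+y. indicator (A \<times> B) (x,y) \<partial>K x) = ennreal (indicator A x * measure (K x) B)"
      using x by (simp add: emeasure_K ennreal_mult' indicator_def)
  qed
  also have "\<dots> = ennreal (integral\<^sup>L M (\<lambda>x. indicator A x * measure (K x) B))"
  proof (rule nn_integral_eq_integral)
    show "integrable M (\<lambda>x. indicator A x * measure (K x) B)"
    proof (rule P.integrable_const_bound[where B=1])
      show "AE x in M. norm (indicator A x * measure (K x) B) \<le> 1"
      proof (rule AE_I2)
        fix x assume x: "x \<in> space M"
        interpret Q: prob_space "K x" by (rule K_prob[OF x])
        show "norm (indicator A x * measure (K x) B) \<le> 1"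
          by (auto simp: indicator_def Q.prob_le_1)
      qed
      show "(\<lambda>x. indicator A x * measure (K x) B) \<in> borel_measurable M"
        by (intro borel_measurable_times borel_measurable_indicator measK_meas A B)
    qed
  qed auto
  finally show ?thesis by (simp add: set_lebesgue_integral_def)
qed

lemma L2D:
  assumes "f \<in> L2 M" shows "f \<in> borel_measurable M" "integrable M (\<lambda>x. (f x)\<^sup>2)"
  using assms unfolding L2_def by auto

lemma L2_integrable:
  assumes "f \<in> L2 M" shows "integrable M f"
proof -
  interpret P: prob_space M by (rule prob)
  show ?thesis
    using P.square_integrable_imp_integrable[OF L2D[OF assms]] .
qed

lemma nu_meas_iff: "f \<in> nu \<rightarrow>\<^sub>M N \<longleftrightarrow> f \<in> M \<Otimes>\<^sub>M M \<rightarrow>\<^sub>M N"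
  by (simp add: measurable_cong_sets[OF sets_nu refl])

lemma Pair_meas: "x \<in> space M \<Longrightarrow> Pair x \<in> K x \<rightarrow>\<^sub>M M \<Otimes>\<^sub>M M"
  by (subst measurable_cong_sets[OF K_sets refl], assumption) simp

lemma integral_K_meas:
  fixes H :: "'a \<times> 'a \<Rightarrow> real"
  assumes H[measurable]: "H \<in> borel_measurable (M \<Otimes>\<^sub>M M)"
  shows "(\<lambda>x. \<integral>y. H (x,y) \<partial>K x) \<in> borel_measurable M"
proof -
  have "(\<lambda>x. integral\<^sup>L (distr (K x) (M \<Otimes>\<^sub>M M) (Pair x)) H) \<in> borel_measurable M"
    by (rule measurable_compose[OF Kd_meas integral_measurable_subprob_algebra[OF H]])
  then show ?thesis
    by (rule measurable_cong[THEN iffD1, rotated]) (simp add: integral_distr[OF Pair_meas H])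
qed

lemma nn_integral_K_meas:
  fixes H :: "'a \<times> 'a \<Rightarrow> real"
  assumes H[measurable]: "H \<in> borel_measurable (M \<Otimes>\<^sub>M M)"
  shows "(\<lambda>x. \<integral>\<^sup>+y. ennreal (H (x,y)) \<partial>K x) \<in> borel_measurable M"
  using nn_integral_measurable_subprob_algebra2[of "\<lambda>x y. ennreal (H (x,y))" M M K] by simp

lemma integral_nu:
  fixes H :: "'a \<times> 'a \<Rightarrow> real"
  assumes H[measurable]: "H \<in> borel_measurable (M \<Otimes>\<^sub>M M)" and int: "integrable nu H"
  shows "integral\<^sup>L nu H = (\<integral>x. (\<integral>y. H (x,y) \<partial>K x) \<partial>M)"
proof -
  define Pp where "Pp x = (\<integral>\<^sup>+y. ennreal (H (x,y)) \<partial>K x)" for x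
  define Nn where "Nn x = (\<integral>\<^sup>+y. ennreal (- H (x,y)) \<partial>K x)" for x
  have Pm[measurable]: "Pp \<in> borel_measurable M" unfolding Pp_def by (rule nn_integral_K_meas[OF H])
  have Nm[measurable]: "Nn \<in> borel_measurable M" unfolding Nn_def
    using nn_integral_K_meas[of "\<lambda>z. - H z"] by simp
  have HP: "(\<integral>\<^sup>+z. ennreal (H z) \<partial>nu) = (\<integral>\<^sup>+x. Pp x \<partial>M)"
    unfolding Pp_def by (rule nn_integral_nu) simp
  have HN: "(\<integral>\<^sup>+z. ennreal (- H z) \<partial>nu) = (\<integral>\<^sup>+x. Nn x \<partial>M)"
    unfolding Nn_def by (rule nn_integral_nu) simp
  have fin: "(\<integral>\<^sup>+z. ennreal (norm (H z)) \<partial>nu) < \<infinity>"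
    using int by (simp add: integrable_iff_bounded)
  have le1: "(\<integral>\<^sup>+z. ennreal (H z) \<partial>nu) \<le> (\<integral>\<^sup>+z. ennreal (norm (H z)) \<partial>nu)"
    by (intro nn_integral_mono) (simp add: ennreal_leI)
  have le2: "(\<integral>\<^sup>+z. ennreal (- H z) \<partial>nu) \<le> (\<integral>\<^sup>+z. ennreal (norm (H z)) \<partial>nu)"
    by (intro nn_integral_mono) (simp add: ennreal_leI)
  have finP: "(\<integral>\<^sup>+x. Pp x \<partial>M) < \<top>" using le1 fin HP by simp
  have finN: "(\<integral>\<^sup>+x. Nn x \<partial>M) < \<top>" using le2 fin HN by simp
  have aeP: "AE x in M. Pp x \<noteq> \<infinity>" using finP by (intro nn_integral_PInf_AE) (auto simp: top_unique)
  have aeN: "AE x in M. Nn x \<noteq> \<infinity>" using finN by (intro nn_integral_PInf_AE) (auto simp: top_unique)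
  have ae: "AE x in M. (\<integral>y. H (x,y) \<partial>K x) = enn2real (Pp x) - enn2real (Nn x)"
    using aeP aeN AE_space
  proof eventually_elim
    case (elim x)
    show ?case
    proof -
      have x: "x \<in> space M" using elim by simp
      have Hx[measurable]: "(\<lambda>y. H (x,y)) \<in> borel_measurable (K x)"
        using measurable_compose[OF Pair_meas[OF x] H] by (simp add: comp_def)
      have "(\<integral>\<^sup>+y. ennreal (norm (H (x,y))) \<partial>K x) = Pp x + Nn x"
        unfolding Pp_def Nn_def
        by (subst nn_integral_add[symmetric]) (auto intro!: nn_integral_cong simp: ennreal_neg abs_real_def)
      with elim have "integrable (K x) (\<lambda>y. H (x,y))"
        by (simp add: integrable_iff_bounded less_top)
      then show ?thesis unfolding Pp_def Nn_def by (rule real_lebesgue_integral_def)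
    qed
  qed
  have eqP: "(\<integral>\<^sup>+x. ennreal (enn2real (Pp x)) \<partial>M) = (\<integral>\<^sup>+x. Pp x \<partial>M)"
    by (rule nn_integral_cong_AE) (use aeP in \<open>eventually_elim, simp add: less_top\<close>)
  have eqN: "(\<integral>\<^sup>+x. ennreal (enn2real (Nn x)) \<partial>M) = (\<integral>\<^sup>+x. Nn x \<partial>M)"
    by (rule nn_integral_cong_AE) (use aeN in \<open>eventually_elim, simp add: less_top\<close>)
  have intP: "integrable M (\<lambda>x. enn2real (Pp x))"
    by (intro integrableI_bounded) (auto simp: eqP finP)
  have intN: "integrable M (\<lambda>x. enn2real (Nn x))"
    by (intro integrableI_bounded) (auto simp: eqN finN)
  have "(\<integral>x. (\<integral>y. H (x,y) \<partial>K x) \<partial>M) = (\<integral>x. enn2real (Pp x) - enn2real (Nn x) \<partial>M)"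
    by (rule integral_cong_AE) (auto simp: integral_K_meas[OF H] ae)
  also have "\<dots> = (\<integral>x. enn2real (Pp x) \<partial>M) - (\<integral>x. enn2real (Nn x) \<partial>M)"
    by (rule Bochner_Integration.integral_diff[OF intP intN])
  also have "\<dots> = enn2real (\<integral>\<^sup>+x. Pp x \<partial>M) - enn2real (\<integral>\<^sup>+x. Nn x \<partial>M)"
    by (simp add: integral_eq_nn_integral eqP eqN)
  also have "\<dots> = integral\<^sup>L nu H"
    by (simp add: real_lebesgue_integral_def[OF int] HP HN)
  finally show ?thesis ..
qed

lemma nn_fst:
  assumes F[measurable]: "F \<in> borel_measurable M"
  shows "(\<integral>\<^sup>+z. F (fst z) \<partial>nu) = (\<integral>\<^sup>+x. F x \<partial>M)"
proof -
  have "(\<integral>\<^sup>+z. F (fst z) \<partial>nu) = (\<integral>\<^sup>+x. \<integral>\<^sup>+y. F x \<partial>K x \<partial>M)"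
    using nn_integral_nu[of "\<lambda>z. F (fst z)"] by simp
  also have "\<dots> = (\<integral>\<^sup>+x. F x \<partial>M)"
  proof (rule nn_integral_cong)
    fix x assume x: "x \<in> space M"
    interpret Q: prob_space "K x" by (rule K_prob[OF x])
    show "(\<integral>\<^sup>+y. F x \<partial>K x) = F x" by (simp add: Q.emeasure_space_1)
  qed
  finally show ?thesis .
qed

lemma int_fst:
  fixes F :: "'a \<Rightarrow> real"
  assumes int: "integrable M F"
  shows "integrable nu (\<lambda>z. F (fst z))" "integral\<^sup>L nu (\<lambda>z. F (fst z)) = integral\<^sup>L M F"
proof -
  have F[measurable]: "F \<in> borel_measurable M" using int by auto
  have m: "(\<lambda>z. F (fst z)) \<in> borel_measurable (M \<Otimes>\<^sub>M M)" by measurable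
  have e: "(\<integral>\<^sup>+z. ennreal (norm (F (fst z))) \<partial>nu) = (\<integral>\<^sup>+x. ennreal (norm (F x)) \<partial>M)"
    by (rule nn_fst) simp
  show i: "integrable nu (\<lambda>z. F (fst z))"
    using int unfolding integrable_iff_bounded
    by (simp only: nu_meas_iff m e)
  have "integral\<^sup>L nu (\<lambda>z. F (fst z)) = (\<integral>x. (\<integral>y. F x \<partial>K x) \<partial>M)"
    using integral_nu[OF m i] by simp
  also have "\<dots> = integral\<^sup>L M F"
  proof (rule Bochner_Integration.integral_cong[OF refl])
    fix x assume x: "x \<in> space M"
    interpret Q: prob_space "K x" by (rule K_prob[OF x])
    show "(\<integral>y. F x \<partial>K x) = F x" by (simp add: Q.prob_space)
  qed
  finally show "integral\<^sup>L nu (\<lambda>z. F (fst z)) = integral\<^sup>L M F" .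
qed

end

lemma abs_mult_le_sq: "\<bar>a * b\<bar> \<le> a\<^sup>2 + (b::real)\<^sup>2"
proof -
  have "0 \<le> (\<bar>a\<bar> - \<bar>b\<bar>)\<^sup>2" by simp
  then have "2 * \<bar>a\<bar> * \<bar>b\<bar> \<le> a\<^sup>2 + b\<^sup>2" by (simp add: power2_eq_square algebra_simps)
  moreover have "0 \<le> \<bar>a\<bar> * \<bar>b\<bar>" by simp
  ultimately have "\<bar>a\<bar> * \<bar>b\<bar> \<le> a\<^sup>2 + b\<^sup>2" by linarith
  then show ?thesis by (simp add: abs_mult)
qed

locale rchain = chain +
  assumes rev: "reversible M K" and nnd: "nonneg_definite M K"
begin

lemma nu_swap: "distr nu (M \<Otimes>\<^sub>M M) (\<lambda>(x,y). (y,x)) = nu"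
proof (rule measure_eqI_generator_eq[OF Int_stable_pair_measure_generator[of M M], where \<Omega>="space M \<times> space M" and A="\<lambda>_. space M \<times> space M"])
  show "{a \<times> b |a b. a \<in> sets M \<and> b \<in> sets M} \<subseteq> Pow (space M \<times> space M)"
    using sets.sets_into_space by fastforce
  fix X assume "X \<in> {a \<times> b |a b. a \<in> sets M \<and> b \<in> sets M}"
  then obtain A B where X: "X = A \<times> B" and A: "A \<in> sets M" and B: "B \<in> sets M" by blast
  have "emeasure (distr nu (M \<Otimes>\<^sub>M M) (\<lambda>(x,y). (y,x))) X = emeasure nu (B \<times> A)"
    apply (subst emeasure_distr)
    using A B apply (auto simp: X measurable_cong_sets[OF sets_nu refl])
    apply (rule arg_cong[where f="emeasure nu"])
    using sets.sets_into_space[OF A] sets.sets_into_space[OF B] by (auto simp: space_pair_measure sets_eq_imp_space_eq[OF sets_nu])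
  also have "\<dots> = emeasure nu X"
    using rev A B unfolding reversible_def X by (simp add: emeasure_nu_rect)
  finally show "emeasure (distr nu (M \<Otimes>\<^sub>M M) (\<lambda>(x,y). (y,x))) X = emeasure nu X" .
next
  show "sets (distr nu (M \<Otimes>\<^sub>M M) (\<lambda>(x,y). (y,x))) = sigma_sets (space M \<times> space M) {a \<times> b |a b. a \<in> sets M \<and> b \<in> sets M}"
    by (simp add: sets_pair_measure)
  show "sets nu = sigma_sets (space M \<times> space M) {a \<times> b |a b. a \<in> sets M \<and> b \<in> sets M}"
    by (simp add: sets_nu sets_pair_measure)
  show "range (\<lambda>_. space M \<times> space M) \<subseteq> {a \<times> b |a b. a \<in> sets M \<and> b \<in> sets M}" by auto
  show "(\<Union>i. space M \<times> space M) = space M \<times> space M" by simp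
  show "emeasure (distr nu (M \<Otimes>\<^sub>M M) (\<lambda>(x,y). (y,x))) (space M \<times> space M) \<noteq> \<infinity>"
    using nu_fin by (simp add: emeasure_distr)
qed

lemma nn_swap:
  assumes G[measurable]: "G \<in> borel_measurable (M \<Otimes>\<^sub>M M)"
  shows "(\<integral>\<^sup>+z. G z \<partial>nu) = (\<integral>\<^sup>+z. G (snd z, fst z) \<partial>nu)"
proof -
  have "(\<integral>\<^sup>+z. G z \<partial>nu) = (\<integral>\<^sup>+z. G z \<partial>distr nu (M \<Otimes>\<^sub>M M) (\<lambda>(x,y). (y,x)))"
    by (simp add: nu_swap)
  also have "\<dots> = (\<integral>\<^sup>+z. G (snd z, fst z) \<partial>nu)"
    by (subst nn_integral_distr) (auto simp: nu_meas_iff case_prod_beta')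
  finally show ?thesis .
qed

lemma int_swap:
  fixes G :: "'a \<times> 'a \<Rightarrow> real"
  assumes G[measurable]: "G \<in> borel_measurable (M \<Otimes>\<^sub>M M)"
  shows "integral\<^sup>L nu G = (\<integral>z. G (snd z, fst z) \<partial>nu)"
proof -
  have "integral\<^sup>L nu G = integral\<^sup>L (distr nu (M \<Otimes>\<^sub>M M) (\<lambda>(x,y). (y,x))) G"
    by (simp add: nu_swap)
  also have "\<dots> = (\<integral>z. G (snd z, fst z) \<partial>nu)"
    by (subst integral_distr) (auto simp: nu_meas_iff case_prod_beta')
  finally show ?thesis .
qed

lemma intgr_swap:
  fixes G :: "'a \<times> 'a \<Rightarrow> real"
  assumes G[measurable]: "G \<in> borel_measurable (M \<Otimes>\<^sub>M M)" and i: "integrable nu G"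
  shows "integrable nu (\<lambda>z. G (snd z, fst z))"
proof -
  have "integrable (distr nu (M \<Otimes>\<^sub>M M) (\<lambda>(x,y). (y,x))) G" using i by (simp add: nu_swap)
  then show ?thesis
    by (subst (asm) integrable_distr_eq) (auto simp: nu_meas_iff case_prod_beta')
qed

lemma int_snd:
  fixes F :: "'a \<Rightarrow> real"
  assumes int: "integrable M F"
  shows "integrable nu (\<lambda>z. F (snd z))" "integral\<^sup>L nu (\<lambda>z. F (snd z)) = integral\<^sup>L M F"
proof -
  have F[measurable]: "F \<in> borel_measurable M" using int by auto
  show "integrable nu (\<lambda>z. F (snd z))"
    using intgr_swap[of "\<lambda>z. F (fst z)"] int_fst[OF int] by simp
  show "integral\<^sup>L nu (\<lambda>z. F (snd z)) = integral\<^sup>L M F"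
    using int_swap[of "\<lambda>z. F (snd z)"] int_fst[OF int] by simp
qed

lemma L2_prod_int:
  assumes f: "f \<in> L2 M" and g: "g \<in> L2 M"
  shows "integrable M (\<lambda>x. f x * g x)"
proof (rule Bochner_Integration.integrable_bound)
  show "integrable M (\<lambda>x. (f x)\<^sup>2 + (g x)\<^sup>2)" using L2D[OF f] L2D[OF g] by simp
  show "(\<lambda>x. f x * g x) \<in> borel_measurable M" using L2D[OF f] L2D[OF g] by simp
  show "AE x in M. norm (f x * g x) \<le> norm ((f x)\<^sup>2 + (g x)\<^sup>2)"
    using abs_mult_le_sq by auto
qed

lemma int_prod:
  assumes f: "f \<in> L2 M" and g: "g \<in> L2 M"
  shows "integrable nu (\<lambda>z. f (fst z) * g (snd z))"
proof (rule Bochner_Integration.integrable_bound)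
  have [measurable]: "f \<in> borel_measurable M" "g \<in> borel_measurable M" using L2D f g by auto
  show "integrable nu (\<lambda>z. (f (fst z))\<^sup>2 + (g (snd z))\<^sup>2)"
    using int_fst(1)[OF L2D(2)[OF f]] int_snd(1)[OF L2D(2)[OF g]] by simp
  show "(\<lambda>z. f (fst z) * g (snd z)) \<in> borel_measurable nu" by (simp add: nu_meas_iff)
  show "AE z in nu. norm (f (fst z) * g (snd z)) \<le> norm ((f (fst z))\<^sup>2 + (g (snd z))\<^sup>2)"
    using abs_mult_le_sq by auto
qed

lemma inner_fst:
  assumes f: "f \<in> L2 M" and g: "g \<in> L2 M"
  shows "integrable nu (\<lambda>z. f (fst z) * g (fst z))" "(\<integral>z. f (fst z) * g (fst z) \<partial>nu) = inner_mu M f g"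
  using int_fst[OF L2_prod_int[OF f g]] unfolding inner_mu_def by auto

lemma inner_snd:
  assumes f: "f \<in> L2 M" and g: "g \<in> L2 M"
  shows "integrable nu (\<lambda>z. f (snd z) * g (snd z))" "(\<integral>z. f (snd z) * g (snd z) \<partial>nu) = inner_mu M f g"
  using int_snd[OF L2_prod_int[OF f g]] unfolding inner_mu_def by auto

lemma inner_P:
  assumes f: "f \<in> L2 M" and g: "g \<in> L2 M"
  shows "inner_mu M f (kernel_apply K g) = (\<integral>z. f (fst z) * g (snd z) \<partial>nu)"
proof -
  have [measurable]: "f \<in> borel_measurable M" "g \<in> borel_measurable M" using L2D f g by auto
  have "(\<integral>z. f (fst z) * g (snd z) \<partial>nu) = (\<integral>x. (\<integral>y. f x * g y \<partial>K x) \<partial>M)"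
    using integral_nu[of "\<lambda>z. f (fst z) * g (snd z)"] int_prod[OF f g] by simp
  also have "\<dots> = inner_mu M f (kernel_apply K g)"
    unfolding inner_mu_def kernel_apply_def by simp
  finally show ?thesis ..
qed

definition Ef where "Ef f = inner_mu M f f - inner_mu M f (kernel_apply K f)"

lemma Ef_eq:
  assumes f: "f \<in> L2 M"
  shows "Ef f = (\<integral>z. (f (fst z) - f (snd z))\<^sup>2 \<partial>nu) / 2"
proof -
  have [measurable]: "f \<in> borel_measurable M" using L2D f by auto
  have i1: "integrable nu (\<lambda>z. f (fst z) * f (fst z))" using inner_fst[OF f f] by simp
  have i2: "integrable nu (\<lambda>z. f (snd z) * f (snd z))" using inner_snd[OF f f] by simp
  have i3: "integrable nu (\<lambda>z. f (fst z) * f (snd z))" using int_prod[OF f f] by simp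
  have "(\<integral>z. (f (fst z) - f (snd z))\<^sup>2 \<partial>nu)
      = (\<integral>z. f (fst z) * f (fst z) + f (snd z) * f (snd z) - 2 * (f (fst z) * f (snd z)) \<partial>nu)"
    by (simp add: power2_eq_square algebra_simps)
  also have "\<dots> = (\<integral>z. f (fst z) * f (fst z) \<partial>nu) + (\<integral>z. f (snd z) * f (snd z) \<partial>nu)
      - 2 * (\<integral>z. f (fst z) * f (snd z) \<partial>nu)"
    using i1 i2 i3 by simp
  also have "\<dots> = 2 * Ef f"
    unfolding Ef_def using inner_fst[OF f f] inner_snd[OF f f] inner_P[OF f f] by simp
  finally show ?thesis by simp
qed

lemma Ef_nonneg: "f \<in> L2 M \<Longrightarrow> 0 \<le> Ef f"
  by (simp add: Ef_eq)

lemma L2_diff_const: "f \<in> L2 M \<Longrightarrow> (\<lambda>x. f x - c) \<in> L2 M"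
proof -
  interpret P: prob_space M by (rule prob)
  assume f: "f \<in> L2 M"
  have "integrable M (\<lambda>x. (f x)\<^sup>2 - 2 * c * f x + c\<^sup>2)"
    using L2D[OF f] L2_integrable[OF f] by simp
  then show ?thesis using L2D[OF f] unfolding L2_def by (simp add: power2_diff algebra_simps)
qed

lemma Ef_le_var: 
  assumes f: "f \<in> L2 M" shows "Ef f \<le> var_mu M f"
proof -
  interpret P: prob_space M by (rule prob)
  define c where "c = integral\<^sup>L M f"
  define g where "g x = f x - c" for x
  have g: "g \<in> L2 M" unfolding g_def by (rule L2_diff_const[OF f])
  have "Ef f = Ef g" unfolding Ef_eq[OF f] Ef_eq[OF g] by (simp add: g_def)
  also have "\<dots> \<le> inner_mu M g g"
  proof -
    have "0 \<le> inner_mu M (kernel_apply K g) g" using nnd g unfolding nonneg_definite_def by blast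
    then show ?thesis unfolding Ef_def inner_mu_def by (simp add: mult.commute)
  qed
  also have "inner_mu M g g = var_mu M f"
  proof -
    have "inner_mu M g g = (\<integral>x. (f x)\<^sup>2 - 2 * c * f x + c\<^sup>2 \<partial>M)"
      unfolding inner_mu_def g_def by (simp add: power2_eq_square algebra_simps)
    also have "\<dots> = (\<integral>x. (f x)\<^sup>2 \<partial>M) - 2 * c * c + c\<^sup>2"
      using L2D[OF f] L2_integrable[OF f] by (simp add: c_def P.prob_space)
    also have "\<dots> = var_mu M f"
      unfolding var_mu_def inner_mu_def c_def by (simp add: power2_eq_square)
    finally show ?thesis .
  qed
  finally show ?thesis .
qed

end

locale part = rchain +
  fixes A :: "nat \<Rightarrow> 'a set" and J :: nat
  assumes A_sets: "\<forall>j<J. A j \<in> sets M" and disj: "disjoint_family_on A {..<J}"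
    and cover: "(\<Union>j<J. A j) = space M" and pos: "\<forall>j<J. measure M (A j) > 0"
begin

lemma A_in[measurable]: "j < J \<Longrightarrow> A j \<in> sets M" using A_sets by auto

lemma in_some: "x \<in> space M \<Longrightarrow> \<exists>i<J. x \<in> A i" using cover by auto

lemma A_sub: "j < J \<Longrightarrow> A j \<subseteq> space M" using cover by auto

lemma A_disj: "i < J \<Longrightarrow> j < J \<Longrightarrow> x \<in> A i \<Longrightarrow> x \<in> A j \<Longrightarrow> i = j"
  using disj unfolding disjoint_family_on_def by auto

lemma sum_ind:
  assumes i: "i < J" "x \<in> A i"
  shows "(\<Sum>j<J. indicator (A j) x * c j) = (c i :: real)"
proof -
  have "(\<Sum>j<J. indicator (A j) x * c j) = (\<Sum>j<J. if j = i then c i else 0)"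
    using A_disj i by (intro sum.cong) (auto simp: indicator_def)
  also have "\<dots> = c i" using i by simp
  finally show ?thesis .
qed

definition blk :: "(nat \<Rightarrow> real) \<Rightarrow> 'a \<Rightarrow> real" where
  "blk g x = (\<Sum>j<J. indicator (A j) x * g j)"

lemma blk_meas[measurable]: "blk g \<in> borel_measurable M"
  unfolding blk_def by (intro borel_measurable_sum borel_measurable_times borel_measurable_indicator A_in) auto

lemma blk_eq: "i < J \<Longrightarrow> x \<in> A i \<Longrightarrow> blk g x = g i"
  unfolding blk_def by (rule sum_ind)

lemma blk_bound: "\<bar>blk g x\<bar> \<le> (\<Sum>j<J. \<bar>g j\<bar>)"
  unfolding blk_def
  by (rule order_trans[OF sum_abs]) (intro sum_mono, auto simp: indicator_def abs_mult)

lemma blk_L2: "blk g \<in> L2 M"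
proof -
  interpret P: prob_space M by (rule prob)
  have "integrable M (\<lambda>x. (blk g x)\<^sup>2)"
  proof (rule P.integrable_const_bound[where B="(\<Sum>j<J. \<bar>g j\<bar>)\<^sup>2"])
    show "AE x in M. norm ((blk g x)\<^sup>2) \<le> (\<Sum>j<J. \<bar>g j\<bar>)\<^sup>2"
      by (intro AE_I2) (metis abs_ge_zero blk_bound power2_abs power_mono real_norm_def abs_power2)
  qed simp
  then show ?thesis unfolding L2_def by simp
qed

definition mu where "mu j = measure M (A j)"

lemma int_ind_const: "j < J \<Longrightarrow> (\<integral>x. indicator (A j) x * c \<partial>M) = mu j * c"
  using A_sub by (simp add: mu_def Int_absorb2)

lemma ind_const_int: "j < J \<Longrightarrow> integrable M (\<lambda>x. indicator (A j) x * (c::real))"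
proof -
  interpret P: prob_space M by (rule prob)
  assume j: "j < J"
  show ?thesis using j by (intro P.integrable_const_bound[where B="\<bar>c\<bar>"]) (auto simp: indicator_def)
qed

lemma inner_blk: "inner_mu M (blk g) (blk h) = (\<Sum>j<J. mu j * (g j * h j))"
proof -
  have "inner_mu M (blk g) (blk h) = (\<integral>x. (\<Sum>j<J. indicator (A j) x * (g j * h j)) \<partial>M)"
    unfolding inner_mu_def
  proof (rule Bochner_Integration.integral_cong[OF refl])
    fix x assume "x \<in> space M"
    then obtain i where i: "i < J" "x \<in> A i" using in_some by blast
    show "blk g x * blk h x = (\<Sum>j<J. indicator (A j) x * (g j * h j))"
      using blk_eq[OF i] sum_ind[OF i] by simp
  qed
  also have "\<dots> = (\<Sum>j<J. mu j * (g j * h j))"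
    by (subst Bochner_Integration.integral_sum, rule ind_const_int, simp)
       (rule sum.cong[OF refl], simp add: int_ind_const mu_def)
  finally show ?thesis .
qed

lemma int_blk: "integral\<^sup>L M (blk g) = (\<Sum>j<J. mu j * g j)"
  unfolding blk_def by (subst Bochner_Integration.integral_sum, rule ind_const_int, simp)
       (rule sum.cong[OF refl], simp add: int_ind_const mu_def)

lemma P_blk: "x \<in> space M \<Longrightarrow> kernel_apply K (blk h) x = (\<Sum>j<J. h j * measure (K x) (A j))"
proof -
  assume x: "x \<in> space M"
  interpret Q: prob_space "K x" by (rule K_prob[OF x])
  have "kernel_apply K (blk h) x = (\<Sum>j<J. \<integral>y. indicator (A j) y * h j \<partial>K x)"
  proof -
    have "integrable (K x) (\<lambda>y. indicator (A j) y * h j)" if j: "j < J" for j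
    proof (rule Q.integrable_const_bound[where B="\<bar>h j\<bar>"])
      show "AE y in K x. norm (indicator (A j) y * h j) \<le> \<bar>h j\<bar>"
        by (intro AE_I2) (simp add: indicator_def)
      show "(\<lambda>y. indicator (A j) y * h j) \<in> borel_measurable (K x)"
        using j by (simp add: measurable_cong_sets[OF K_sets[OF x] refl])
    qed
    then show ?thesis unfolding kernel_apply_def blk_def
      by (subst Bochner_Integration.integral_sum) auto
  qed
  also have "\<dots> = (\<Sum>j<J. h j * measure (K x) (A j))"
    using A_sub by (intro sum.cong refl) (simp add: K_space[OF x] Int_absorb2)
  finally show ?thesis .
qed

lemma inner_blk_P:
  "inner_mu M (blk g) (kernel_apply K (blk h)) =
     (\<Sum>i<J. \<Sum>j<J. (g i * h j) * (LINT x:A i|M. measure (K x) (A j)))"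
proof -
  interpret P: prob_space M by (rule prob)
  have int: "integrable M (\<lambda>x. indicator (A i) x * measure (K x) (A j) * c)" if "i < J" "j < J" for i j c
  proof (rule P.integrable_const_bound[where B="\<bar>c\<bar>"])
    show "AE x in M. norm (indicator (A i) x * measure (K x) (A j) * c) \<le> \<bar>c\<bar>"
    proof (rule AE_I2)
      fix x assume x: "x \<in> space M"
      interpret Q: prob_space "K x" by (rule K_prob[OF x])
      have "\<bar>indicator (A i) x * measure (K x) (A j)\<bar> \<le> 1"
        by (auto simp: indicator_def)
      then have "\<bar>indicator (A i) x * measure (K x) (A j)\<bar> * \<bar>c\<bar> \<le> 1 * \<bar>c\<bar>"
        by (intro mult_right_mono) auto
      then show "norm (indicator (A i) x * measure (K x) (A j) * c) \<le> \<bar>c\<bar>"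
        by (simp add: abs_mult)
    qed
    show "(\<lambda>x. indicator (A i) x * measure (K x) (A j) * c) \<in> borel_measurable M"
      using that by (intro borel_measurable_times borel_measurable_indicator measK_meas A_in) auto
  qed
  have "inner_mu M (blk g) (kernel_apply K (blk h)) =
     (\<integral>x. (\<Sum>i<J. \<Sum>j<J. indicator (A i) x * measure (K x) (A j) * (g i * h j)) \<partial>M)"
    unfolding inner_mu_def
  proof (rule Bochner_Integration.integral_cong[OF refl])
    fix x assume x: "x \<in> space M"
    then obtain i where i: "i < J" "x \<in> A i" using in_some by blast
    have "(\<Sum>i<J. \<Sum>j<J. indicator (A i) x * measure (K x) (A j) * (g i * h j))
        = (\<Sum>i<J. indicator (A i) x * (\<Sum>j<J. measure (K x) (A j) * (g i * h j)))"
      by (simp add: sum_distrib_left mult.assoc)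
    also have "\<dots> = (\<Sum>j<J. measure (K x) (A j) * (g i * h j))"
      by (rule sum_ind[OF i])
    finally show "blk g x * kernel_apply K (blk h) x =
       (\<Sum>i<J. \<Sum>j<J. indicator (A i) x * measure (K x) (A j) * (g i * h j))"
      using blk_eq[OF i] P_blk[OF x] by (simp add: sum_distrib_left algebra_simps)
  qed
  also have "\<dots> = (\<Sum>i<J. (\<integral>x. (\<Sum>j<J. indicator (A i) x * measure (K x) (A j) * (g i * h j)) \<partial>M))"
    by (rule Bochner_Integration.integral_sum) (intro Bochner_Integration.integrable_sum int, auto)
  also have "\<dots> = (\<Sum>i<J. \<Sum>j<J. (\<integral>x. indicator (A i) x * measure (K x) (A j) * (g i * h j) \<partial>M))"
    by (intro sum.cong refl Bochner_Integration.integral_sum int) auto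
  also have "\<dots> = (\<Sum>i<J. \<Sum>j<J. (g i * h j) * (LINT x:A i|M. measure (K x) (A j)))"
    by (simp add: set_lebesgue_integral_def mult.commute)
  finally show ?thesis .
qed

lemma mu_pos: "j < J \<Longrightarrow> mu j > 0" using pos by (simp add: mu_def)

lemma pm_eq: "proj_measure M A J = point_measure {..<J} (\<lambda>j. ennreal (mu j))"
proof -
  interpret P: prob_space M by (rule prob)
  show ?thesis unfolding proj_measure_def mu_def by (simp add: P.emeasure_eq_measure)
qed

lemma int_pm: "integral\<^sup>L (proj_measure M A J) F = (\<Sum>j<J. mu j * F j)"
  unfolding pm_eq by (subst lebesgue_integral_point_measure_finite) (auto simp: mu_def)

lemma pmat_nonneg: "0 \<le> proj_matrix M K A i j"
  unfolding proj_matrix_def set_lebesgue_integral_def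
  by (intro divide_nonneg_nonneg Bochner_Integration.integral_nonneg) (auto simp: indicator_def)

lemma P_pm: "kernel_apply (proj_kernel M K A J) h i = (\<Sum>j<J. proj_matrix M K A i j * h j)"
  unfolding kernel_apply_def proj_kernel_def
  by (subst lebesgue_integral_point_measure_finite) (auto simp: pmat_nonneg)

lemma L2_pm: "g \<in> L2 (proj_measure M A J)"
  unfolding L2_def pm_eq by (auto intro: integrable_point_measure_finite)

lemma inner_pm: "inner_mu (proj_measure M A J) g h = inner_mu M (blk g) (blk h)"
  unfolding inner_blk by (simp add: inner_mu_def int_pm)

lemma var_pm: "var_mu (proj_measure M A J) g = var_mu M (blk g)"
  unfolding var_mu_def inner_pm by (simp add: int_blk int_pm)

lemma inner_pm_P: "inner_mu (proj_measure M A J) g (kernel_apply (proj_kernel M K A J) h)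
   = inner_mu M (blk g) (kernel_apply K (blk h))"
proof -
  have "inner_mu (proj_measure M A J) g (kernel_apply (proj_kernel M K A J) h)
     = (\<Sum>i<J. mu i * (g i * (\<Sum>j<J. proj_matrix M K A i j * h j)))"
    unfolding inner_mu_def int_pm P_pm ..
  also have "\<dots> = (\<Sum>i<J. \<Sum>j<J. (g i * h j) * (LINT x:A i|M. measure (K x) (A j)))"
  proof (rule sum.cong[OF refl])
    fix i assume "i \<in> {..<J}"
    then have "mu i \<noteq> 0" using mu_pos by (simp add: less_imp_neq[symmetric])
    then show "mu i * (g i * (\<Sum>j<J. proj_matrix M K A i j * h j)) =
          (\<Sum>j<J. (g i * h j) * (LINT x:A i|M. measure (K x) (A j)))"
      unfolding proj_matrix_def sum_distrib_left mu_def[symmetric]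
      by (intro sum.cong refl) (simp add: field_simps)
  qed
  finally show ?thesis unfolding inner_blk_P .
qed

lemma EE_pm: "EE (proj_measure M A J) (proj_kernel M K A J) g = Ef (blk g)"
  unfolding EE_def Ef_def by (subst inner_pm_P, subst inner_pm, rule refl)

end

locale rblock = rchain +
  fixes B :: "'a set"
  assumes B_sets[measurable]: "B \<in> sets M" and B_pos: "measure M B > 0"
begin

definition mB where "mB = measure M B"

lemma mB_pos: "mB > 0" using B_pos by (simp add: mB_def)

lemma emB: "emeasure M B = ennreal mB"
proof -
  interpret P: prob_space M by (rule prob)
  show ?thesis by (simp add: mB_def P.emeasure_eq_measure)
qed

lemma U_eq: "uniform_measure M B = density M (\<lambda>x. ennreal (indicator B x / mB))"
  unfolding uniform_measure_def emB using mB_pos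
  by (intro arg_cong[where f="density M"] ext) (auto simp: indicator_def divide_ennreal[of 1 mB, simplified])

lemma U_prob: "prob_space (uniform_measure M B)"
  by (rule prob_space_uniform_measure) (use mB_pos in \<open>auto simp: emB\<close>)

lemma int_U:
  fixes F :: "'a \<Rightarrow> real"
  assumes F[measurable]: "F \<in> borel_measurable M"
  shows "integral\<^sup>L (uniform_measure M B) F = (\<integral>x. indicator B x * F x \<partial>M) / mB"
  unfolding U_eq
  by (subst integral_density) (auto simp: mB_pos less_imp_le)

lemma intgr_U:
  fixes F :: "'a \<Rightarrow> real"
  assumes F[measurable]: "F \<in> borel_measurable M"
  shows "integrable (uniform_measure M B) F \<longleftrightarrow> integrable M (\<lambda>x. indicator B x * F x)"
proof -
  have "integrable (uniform_measure M B) F \<longleftrightarrow> integrable M (\<lambda>x. (indicator B x / mB) * F x)"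
    unfolding U_eq by (subst integrable_density) (auto simp: mB_pos less_imp_le)
  also have "\<dots> \<longleftrightarrow> integrable M (\<lambda>x. (1/mB) * (indicator B x * F x))" by simp
  also have "\<dots> \<longleftrightarrow> integrable M (\<lambda>x. indicator B x * F x)"
    using mB_pos by (subst integrable_mult_left_iff) auto
  finally show ?thesis .
qed

lemma L2U_psi: "f \<in> L2 (uniform_measure M B) \<Longrightarrow> (\<lambda>x. indicator B x * f x) \<in> L2 M"
proof -
  assume f: "f \<in> L2 (uniform_measure M B)"
  have fm[measurable]: "f \<in> borel_measurable M" using f unfolding L2_def
    by (simp add: measurable_cong_sets[OF sets_uniform_measure refl])
  have e: "integrable (uniform_measure M B) (\<lambda>x. (f x)\<^sup>2) \<longleftrightarrow> integrable M (\<lambda>x. indicator B x * (f x)\<^sup>2)"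
    by (rule intgr_U) simp
  have "integrable M (\<lambda>x. indicator B x * (f x)\<^sup>2)" using f e unfolding L2_def by simp
  moreover have "(\<lambda>x. (indicator B x * f x)\<^sup>2) = (\<lambda>x. indicator B x * (f x)\<^sup>2 :: real)"
    by (auto simp: indicator_def)
  ultimately show ?thesis unfolding L2_def by simp
qed

lemma L2M_U: "f \<in> L2 M \<Longrightarrow> f \<in> L2 (uniform_measure M B)"
proof -
  interpret P: prob_space M by (rule prob)
  assume f: "f \<in> L2 M"
  have fm[measurable]: "f \<in> borel_measurable M" using L2D[OF f] by simp
  have "integrable M (\<lambda>x. indicator B x * (f x)\<^sup>2)"
    using integrable_mult_indicator[OF B_sets L2D(2)[OF f]] by simp
  moreover have e: "integrable (uniform_measure M B) (\<lambda>x. (f x)\<^sup>2) \<longleftrightarrow> integrable M (\<lambda>x. indicator B x * (f x)\<^sup>2)"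
    by (rule intgr_U) simp
  ultimately show ?thesis unfolding L2_def
    by (simp add: measurable_cong_sets[OF sets_uniform_measure refl])
qed

definition T where "T x y = (if x \<in> B \<and> y \<in> B then y else x)"

lemma T_meas[measurable]: "(\<lambda>z. T (fst z) (snd z)) \<in> M \<Otimes>\<^sub>M M \<rightarrow>\<^sub>M M"
  unfolding T_def by measurable

lemma Tx_meas: "x \<in> space M \<Longrightarrow> T x \<in> K x \<rightarrow>\<^sub>M M"
  using measurable_compose[OF Pair_meas T_meas] by (simp add: comp_def)

lemma R_eq:
  assumes x: "x \<in> space M"
  shows "restrict_kernel M K B x = distr (K x) M (T x)"
proof -
  interpret Q: prob_space "K x" by (rule K_prob[OF x])
  have B_sub: "B \<subseteq> space M" using sets.sets_into_space[OF B_sets] .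
  have "restrict_kernel M K B x = measure_of (space M) (sets M) (emeasure (distr (K x) M (T x)))"
    unfolding restrict_kernel_def
  proof (rule measure_of_eq)
    show "sets M \<subseteq> Pow (space M)" using sets.sets_into_space by auto
    fix C assume "C \<in> sigma_sets (space M) (sets M)"
    then have C: "C \<in> sets M" by (simp add: sets.sigma_sets_eq)
    have pre: "T x -` C \<inter> space (K x) \<in> sets (K x)"
      using measurable_sets[OF Tx_meas[OF x] C] .
    show "(if x \<in> B then emeasure (K x) (C \<inter> B) + indicator C x * emeasure (K x) (space M - B)
          else indicator C x) = emeasure (distr (K x) M (T x)) C"
    proof (cases "x \<in> B")
      case True
      have eq: "T x -` C \<inter> space (K x) = (C \<inter> B) \<union> (if x \<in> C then space M - B else {})"
        using True B_sub sets.sets_into_space[OF C] by (auto simp: T_def K_space[OF x] split: if_split_asm)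
      have "emeasure (K x) ((C \<inter> B) \<union> (if x \<in> C then space M - B else {}))
          = emeasure (K x) (C \<inter> B) + emeasure (K x) (if x \<in> C then space M - B else {})"
        by (rule plus_emeasure[symmetric]) (auto simp: K_sets[OF x] C)
      then show ?thesis using True C
        by (simp add: emeasure_distr Tx_meas[OF x] eq indicator_def)
    next
      case False
      have eq: "T x -` C \<inter> space (K x) = (if x \<in> C then space M else {})"
        using False by (auto simp: T_def K_space[OF x])
      show ?thesis using False C
        by (simp add: emeasure_distr Tx_meas[OF x] eq indicator_def sym[OF K_space[OF x]] Q.emeasure_space_1)
    qed
  qed
  also have "\<dots> = distr (K x) M (T x)"
    using measure_of_of_measure[of "distr (K x) M (T x)"] by simp
  finally show ?thesis .
qed

lemma R_apply:
  assumes x: "x \<in> space M" and f[measurable]: "f \<in> borel_measurable M"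
  shows "kernel_apply (restrict_kernel M K B) f x = (\<integral>y. f (T x y) \<partial>K x)"
  unfolding kernel_apply_def R_eq[OF x] by (rule integral_distr[OF Tx_meas[OF x] f])

lemma R_meas:
  assumes f[measurable]: "f \<in> borel_measurable M"
  shows "kernel_apply (restrict_kernel M K B) f \<in> borel_measurable M"
proof -
  have "(\<lambda>x. \<integral>y. f (T x y) \<partial>K x) \<in> borel_measurable M"
    using integral_K_meas[of "\<lambda>z. f (T (fst z) (snd z))"] by simp
  then show ?thesis by (rule measurable_cong[THEN iffD1, rotated]) (simp add: R_apply)
qed

lemma L2U_meas: "f \<in> L2 (uniform_measure M B) \<Longrightarrow> f \<in> borel_measurable M"
  unfolding L2_def by (simp add: measurable_cong_sets[OF sets_uniform_measure refl])

lemma EE_U_formula: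
  assumes f: "f \<in> L2 (uniform_measure M B)"
  defines "g \<equiv> (\<lambda>x. indicator B x * f x)"
  shows "mB * EE (uniform_measure M B) (restrict_kernel M K B) f =
     (\<integral>z. (g (fst z))\<^sup>2 \<partial>nu) - (\<integral>z. g (fst z) * g (snd z) \<partial>nu)
     - (\<integral>z. (g (fst z))\<^sup>2 * indicator (space M - B) (snd z) \<partial>nu)"
    "integrable nu (\<lambda>z. (g (fst z))\<^sup>2)" "integrable nu (\<lambda>z. g (fst z) * g (snd z))"
    "integrable nu (\<lambda>z. (g (fst z))\<^sup>2 * indicator (space M - B) (snd z))"
proof -
  have fm[measurable]: "f \<in> borel_measurable M" by (rule L2U_meas[OF f])
  have g: "g \<in> L2 M" unfolding g_def by (rule L2U_psi[OF f])
  have gm[measurable]: "g \<in> borel_measurable M" using L2D[OF g] by simp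
  show i1: "integrable nu (\<lambda>z. (g (fst z))\<^sup>2)" using int_fst(1)[OF L2D(2)[OF g]] .
  show i3: "integrable nu (\<lambda>z. g (fst z) * g (snd z))" by (rule int_prod[OF g g])
  show i2: "integrable nu (\<lambda>z. (g (fst z))\<^sup>2 * indicator (space M - B) (snd z))"
  proof (rule Bochner_Integration.integrable_bound[OF i1])
    show "(\<lambda>z. (g (fst z))\<^sup>2 * indicator (space M - B) (snd z)) \<in> borel_measurable nu"
      by (simp add: nu_meas_iff)
    show "AE z in nu. norm ((g (fst z))\<^sup>2 * indicator (space M - B) (snd z)) \<le> norm ((g (fst z))\<^sup>2)"
      by (intro AE_I2) (simp add: indicator_def)
  qed
  define H where "H z = indicator B (fst z) * f (fst z) * f (T (fst z) (snd z))" for z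
  have Hm[measurable]: "H \<in> borel_measurable (M \<Otimes>\<^sub>M M)" unfolding H_def by measurable
  have Heq: "H z = g (fst z) * g (snd z) + (g (fst z))\<^sup>2 * indicator (space M - B) (snd z)"
    if "z \<in> space nu" for z
    using that by (cases z) (auto simp: H_def g_def T_def indicator_def power2_eq_square
        sets_eq_imp_space_eq[OF sets_nu] space_pair_measure)
  have iH: "integrable nu H"
  proof -
    have "integrable nu H \<longleftrightarrow> integrable nu (\<lambda>z. g (fst z) * g (snd z) + (g (fst z))\<^sup>2 * indicator (space M - B) (snd z))"
      by (rule Bochner_Integration.integrable_cong) (simp_all add: Heq)
    then show ?thesis using i2 i3 by simp
  qed
  have intH: "integral\<^sup>L nu H = (\<integral>z. g (fst z) * g (snd z) \<partial>nu)
      + (\<integral>z. (g (fst z))\<^sup>2 * indicator (space M - B) (snd z) \<partial>nu)"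
  proof -
    have "integral\<^sup>L nu H = (\<integral>z. g (fst z) * g (snd z) + (g (fst z))\<^sup>2 * indicator (space M - B) (snd z) \<partial>nu)"
      by (rule Bochner_Integration.integral_cong) (simp_all add: Heq)
    then show ?thesis using i2 i3 by simp
  qed
  have "mB * inner_mu (uniform_measure M B) f (kernel_apply (restrict_kernel M K B) f)
      = (\<integral>x. indicator B x * (f x * kernel_apply (restrict_kernel M K B) f x) \<partial>M)"
    unfolding inner_mu_def using mB_pos by (subst int_U) (auto intro!: borel_measurable_times R_meas fm)
  also have "\<dots> = (\<integral>x. (\<integral>y. H (x,y) \<partial>K x) \<partial>M)"
    by (intro Bochner_Integration.integral_cong refl) (simp add: R_apply H_def)
  also have "\<dots> = integral\<^sup>L nu H" by (rule integral_nu[OF Hm iH, symmetric])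
  finally have a: "mB * inner_mu (uniform_measure M B) f (kernel_apply (restrict_kernel M K B) f) = integral\<^sup>L nu H" .
  have "mB * inner_mu (uniform_measure M B) f f = (\<integral>x. indicator B x * (f x * f x) \<partial>M)"
    unfolding inner_mu_def using mB_pos by (subst int_U) auto
  also have "\<dots> = (\<integral>x. (g x)\<^sup>2 \<partial>M)"
    by (intro Bochner_Integration.integral_cong refl) (simp add: g_def indicator_def power2_eq_square)
  also have "\<dots> = (\<integral>z. (g (fst z))\<^sup>2 \<partial>nu)" using int_fst(2)[OF L2D(2)[OF g]] by simp
  finally have b: "mB * inner_mu (uniform_measure M B) f f = (\<integral>z. (g (fst z))\<^sup>2 \<partial>nu)" .
  show "mB * EE (uniform_measure M B) (restrict_kernel M K B) f =
     (\<integral>z. (g (fst z))\<^sup>2 \<partial>nu) - (\<integral>z. g (fst z) * g (snd z) \<partial>nu)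
     - (\<integral>z. (g (fst z))\<^sup>2 * indicator (space M - B) (snd z) \<partial>nu)"
    unfolding EE_def right_diff_distrib a b intH by simp
qed

lemma inner_UU:
  assumes f: "f \<in> L2 (uniform_measure M B)"
  shows "mB * inner_mu (uniform_measure M B) f f = (\<integral>z. (indicator B (fst z) * f (fst z))\<^sup>2 \<partial>nu)"
proof -
  have fm[measurable]: "f \<in> borel_measurable M" by (rule L2U_meas[OF f])
  have g: "(\<lambda>x. indicator B x * f x) \<in> L2 M" by (rule L2U_psi[OF f])
  have "mB * inner_mu (uniform_measure M B) f f = (\<integral>x. indicator B x * (f x * f x) \<partial>M)"
    unfolding inner_mu_def using mB_pos by (subst int_U) auto
  also have "\<dots> = (\<integral>x. (indicator B x * f x)\<^sup>2 \<partial>M)"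
    by (intro Bochner_Integration.integral_cong refl) (simp add: indicator_def power2_eq_square)
  also have "\<dots> = (\<integral>z. (indicator B (fst z) * f (fst z))\<^sup>2 \<partial>nu)"
    using int_fst(2)[OF L2D(2)[OF g]] by simp
  finally show ?thesis .
qed

definition Qd where
  "Qd f = (\<integral>z. indicator B (fst z) * indicator B (snd z) * (f (fst z) - f (snd z))\<^sup>2 \<partial>nu)"

lemma Qd_formula:
  assumes f: "f \<in> L2 (uniform_measure M B)"
  shows "Qd f = 2 * (mB * EE (uniform_measure M B) (restrict_kernel M K B) f)"
proof -
  define g where "g x = indicator B x * f x" for x
  have fm[measurable]: "f \<in> borel_measurable M" by (rule L2U_meas[OF f])
  have gm[measurable]: "g \<in> borel_measurable M" unfolding g_def by simp
  note F = EE_U_formula[OF f, folded g_def]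
  define I1 :: "'a \<times> 'a \<Rightarrow> real" where "I1 z = (g (fst z))\<^sup>2" for z
  define I2 :: "'a \<times> 'a \<Rightarrow> real" where "I2 z = (g (fst z))\<^sup>2 * indicator (space M - B) (snd z)" for z
  define I3 :: "'a \<times> 'a \<Rightarrow> real" where "I3 z = g (fst z) * g (snd z)" for z
  have m1[measurable]: "I1 \<in> borel_measurable (M \<Otimes>\<^sub>M M)" unfolding I1_def by simp
  have m2[measurable]: "I2 \<in> borel_measurable (M \<Otimes>\<^sub>M M)" unfolding I2_def by measurable
  have m3[measurable]: "I3 \<in> borel_measurable (M \<Otimes>\<^sub>M M)" unfolding I3_def by simp
  have i1: "integrable nu I1" "integrable nu (\<lambda>z. I1 (snd z, fst z))"
    using F(2) intgr_swap[OF m1] unfolding I1_def by auto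
  have i2: "integrable nu I2" "integrable nu (\<lambda>z. I2 (snd z, fst z))"
    using F(4) intgr_swap[OF m2] unfolding I2_def by auto
  have i3: "integrable nu I3" using F(3) unfolding I3_def by auto
  have eq: "indicator B (fst z) * indicator B (snd z) * (f (fst z) - f (snd z))\<^sup>2
      = I1 z - I2 z + I1 (snd z, fst z) - I2 (snd z, fst z) - 2 * I3 z" if "z \<in> space nu" for z
    using that by (cases z) (auto simp: I1_def I2_def I3_def g_def indicator_def power2_eq_square algebra_simps
        sets_eq_imp_space_eq[OF sets_nu] space_pair_measure)
  have "Qd f = (\<integral>z. I1 z - I2 z + I1 (snd z, fst z) - I2 (snd z, fst z) - 2 * I3 z \<partial>nu)"
    unfolding Qd_def by (rule Bochner_Integration.integral_cong) (simp_all add: eq)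
  also have "\<dots> = integral\<^sup>L nu I1 - integral\<^sup>L nu I2 + (\<integral>z. I1 (snd z, fst z) \<partial>nu)
      - (\<integral>z. I2 (snd z, fst z) \<partial>nu) - 2 * integral\<^sup>L nu I3"
    using i1 i2 i3 by simp
  also have "\<dots> = 2 * (integral\<^sup>L nu I1 - integral\<^sup>L nu I3 - integral\<^sup>L nu I2)"
    using int_swap[OF m1] int_swap[OF m2] by simp
  also have "\<dots> = 2 * (mB * EE (uniform_measure M B) (restrict_kernel M K B) f)"
    using F(1) unfolding I1_def I2_def I3_def by simp
  finally show ?thesis .
qed

lemma EE_U_bounds:
  assumes f: "f \<in> L2 (uniform_measure M B)"
  shows "0 \<le> EE (uniform_measure M B) (restrict_kernel M K B) f \<and>
         EE (uniform_measure M B) (restrict_kernel M K B) f \<le> var_mu (uniform_measure M B) f"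
proof
  have "0 \<le> Qd f" unfolding Qd_def by (intro Bochner_Integration.integral_nonneg) (auto simp: indicator_def)
  then show "0 \<le> EE (uniform_measure M B) (restrict_kernel M K B) f"
    using Qd_formula[OF f] mB_pos by (simp add: zero_le_mult_iff)
  define c where "c = integral\<^sup>L (uniform_measure M B) f"
  define f' where "f' x = f x - c" for x
  have f': "f' \<in> L2 (uniform_measure M B)" unfolding f'_def by (rule L2_diff_const_gen[OF U_prob f])
  have "Qd f' = Qd f" unfolding Qd_def f'_def by simp
  then have eqE: "EE (uniform_measure M B) (restrict_kernel M K B) f' = EE (uniform_measure M B) (restrict_kernel M K B) f"
    using Qd_formula[OF f] Qd_formula[OF f'] mB_pos by simp
  define g where "g x = indicator B x * f' x" for x
  have g: "g \<in> L2 M" unfolding g_def by (rule L2U_psi[OF f'])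
  note F = EE_U_formula[OF f', folded g_def]
  have "0 \<le> (\<integral>z. (g (fst z))\<^sup>2 * indicator (space M - B) (snd z) \<partial>nu)"
    by (intro Bochner_Integration.integral_nonneg) auto
  moreover have "0 \<le> (\<integral>z. g (fst z) * g (snd z) \<partial>nu)"
  proof -
    have "0 \<le> inner_mu M (kernel_apply K g) g" using nnd g unfolding nonneg_definite_def by blast
    then show ?thesis using inner_P[OF g g] unfolding inner_mu_def by (simp add: mult.commute)
  qed
  ultimately have "mB * EE (uniform_measure M B) (restrict_kernel M K B) f' \<le> (\<integral>z. (g (fst z))\<^sup>2 \<partial>nu)"
    using F(1) by linarith
  also have "\<dots> = mB * inner_mu (uniform_measure M B) f' f'"
    using inner_UU[OF f'] unfolding g_def by simp
  also have "inner_mu (uniform_measure M B) f' f' = var_mu (uniform_measure M B) f"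
    unfolding f'_def c_def by (rule inner_center[OF U_prob f])
  finally show "EE (uniform_measure M B) (restrict_kernel M K B) f \<le> var_mu (uniform_measure M B) f"
    using mB_pos eqE by simp
qed

lemma var_U:
  assumes f: "f \<in> L2 M"
  shows "mB * var_mu (uniform_measure M B) f = (\<integral>x. indicator B x * (f x)\<^sup>2 \<partial>M)
           - (\<integral>x. indicator B x * f x \<partial>M)\<^sup>2 / mB"
proof -
  have fm[measurable]: "f \<in> borel_measurable M" using L2D[OF f] by simp
  have "mB * var_mu (uniform_measure M B) f
     = mB * ((\<integral>x. indicator B x * (f x * f x) \<partial>M) / mB - ((\<integral>x. indicator B x * f x \<partial>M) / mB)\<^sup>2)"
    unfolding var_mu_def inner_mu_def by (subst int_U, simp)+ simp
  also have "\<dots> = (\<integral>x. indicator B x * (f x)\<^sup>2 \<partial>M) - (\<integral>x. indicator B x * f x \<partial>M)\<^sup>2 / mB"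
    using mB_pos by (simp add: power2_eq_square field_simps)
  finally show ?thesis .
qed

end

context part
begin

lemma rb: "j < J \<Longrightarrow> rblock M K (A j)"
  unfolding rblock_def rblock_axioms_def using rchain_axioms pos A_in by auto

definition Dw :: "('a \<times> 'a \<Rightarrow> real) \<Rightarrow> ('a \<Rightarrow> real) \<Rightarrow> real" where
  "Dw w f = (\<integral>z. w z * (f (fst z) - f (snd z))\<^sup>2 \<partial>nu)"

lemma sqd_int:
  assumes f: "f \<in> L2 M"
  shows "integrable nu (\<lambda>z. (f (fst z) - f (snd z))\<^sup>2)"
proof -
  have "integrable nu (\<lambda>z. f (fst z) * f (fst z) + f (snd z) * f (snd z) - 2 * (f (fst z) * f (snd z)))"
    using inner_fst(1)[OF f f] inner_snd(1)[OF f f] int_prod[OF f f] by simp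
  then show ?thesis by (simp add: power2_eq_square algebra_simps)
qed

lemma Dw_int:
  assumes f: "f \<in> L2 M" and w[measurable]: "w \<in> borel_measurable (M \<Otimes>\<^sub>M M)"
    and wb: "\<And>z. z \<in> space nu \<Longrightarrow> \<bar>w z\<bar> \<le> 1"
  shows "integrable nu (\<lambda>z. w z * (f (fst z) - f (snd z))\<^sup>2)"
proof (rule Bochner_Integration.integrable_bound[OF sqd_int[OF f]])
  have [measurable]: "f \<in> borel_measurable M" using L2D[OF f] by simp
  show "(\<lambda>z. w z * (f (fst z) - f (snd z))\<^sup>2) \<in> borel_measurable nu" by (simp add: nu_meas_iff)
  show "AE z in nu. norm (w z * (f (fst z) - f (snd z))\<^sup>2) \<le> norm ((f (fst z) - f (snd z))\<^sup>2)"
  proof (rule AE_I2)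
    fix z assume "z \<in> space nu"
    then have "\<bar>w z\<bar> * (f (fst z) - f (snd z))\<^sup>2 \<le> 1 * (f (fst z) - f (snd z))\<^sup>2"
      using wb by (intro mult_right_mono) auto
    then show "norm (w z * (f (fst z) - f (snd z))\<^sup>2) \<le> norm ((f (fst z) - f (snd z))\<^sup>2)"
      by (simp add: abs_mult)
  qed
qed

definition W :: "'a \<times> 'a \<Rightarrow> real" where
  "W z = (\<Sum>j<J. indicator (A j) (fst z) * indicator (A j) (snd z))"

lemma W_meas[measurable]: "W \<in> borel_measurable (M \<Otimes>\<^sub>M M)"
  unfolding W_def by measurable

lemma space_nu: "space nu = space M \<times> space M"
  by (simp add: sets_eq_imp_space_eq[OF sets_nu] space_pair_measure)

lemma W_cases:
  assumes z: "z \<in> space nu"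
  shows "(W z = 1 \<and> blk c (fst z) = blk c (snd z)) \<or> W z = 0"
proof -
  obtain x y where xy: "z = (x,y)" "x \<in> space M" "y \<in> space M" using z by (auto simp: space_nu)
  obtain i where i: "i < J" "x \<in> A i" using in_some[OF xy(2)] by blast
  obtain k where k: "k < J" "y \<in> A k" using in_some[OF xy(3)] by blast
  have Wz: "W z = indicator (A i) y"
    unfolding W_def xy using sum_ind[OF i, of "\<lambda>j. indicator (A j) y"] by simp
  show ?thesis
  proof (cases "y \<in> A i")
    case True
    then show ?thesis using Wz blk_eq[OF i] blk_eq[OF i(1) True] xy by simp
  next
    case False then show ?thesis using Wz by simp
  qed
qed

lemma W_bound: "z \<in> space nu \<Longrightarrow> \<bar>W z\<bar> \<le> 1" and W_bound': "z \<in> space nu \<Longrightarrow> \<bar>1 - W z\<bar> \<le> 1"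
  and W_nonneg: "z \<in> space nu \<Longrightarrow> 0 \<le> W z" and W_le1: "z \<in> space nu \<Longrightarrow> W z \<le> 1"
  using W_cases[of z "\<lambda>_. 0"] by auto

lemma Ef_split:
  assumes f: "f \<in> L2 M"
  shows "Ef f = Dw W f / 2 + Dw (\<lambda>z. 1 - W z) f / 2"
proof -
  have [measurable]: "f \<in> borel_measurable M" using L2D[OF f] by simp
  have "(\<integral>z. (f (fst z) - f (snd z))\<^sup>2 \<partial>nu) =
     (\<integral>z. W z * (f (fst z) - f (snd z))\<^sup>2 + (1 - W z) * (f (fst z) - f (snd z))\<^sup>2 \<partial>nu)"
    by (rule Bochner_Integration.integral_cong) (simp_all add: algebra_simps)
  also have "\<dots> = Dw W f + Dw (\<lambda>z. 1 - W z) f"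
    unfolding Dw_def
    by (rule Bochner_Integration.integral_add; rule Dw_int[OF f]) (auto intro: W_bound W_bound')
  finally show ?thesis unfolding Ef_eq[OF f] by simp
qed

lemma Ef_blk: "Ef (blk c) = Dw (\<lambda>z. 1 - W z) (blk c) / 2"
proof -
  have "(\<integral>z. (blk c (fst z) - blk c (snd z))\<^sup>2 \<partial>nu) = Dw (\<lambda>z. 1 - W z) (blk c)"
    unfolding Dw_def
  proof (rule Bochner_Integration.integral_cong[OF refl])
    fix z assume "z \<in> space nu"
    then show "(blk c (fst z) - blk c (snd z))\<^sup>2 = (1 - W z) * (blk c (fst z) - blk c (snd z))\<^sup>2"
      using W_cases[of z c] by auto
  qed
  then show ?thesis unfolding Ef_eq[OF blk_L2] by simp
qed

lemma Dw_W_diff: "Dw W (\<lambda>x. f x - blk c x) = Dw W f"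
  unfolding Dw_def
proof (rule Bochner_Integration.integral_cong[OF refl])
  fix z assume "z \<in> space nu"
  then show "W z * (f (fst z) - blk c (fst z) - (f (snd z) - blk c (snd z)))\<^sup>2 = W z * (f (fst z) - f (snd z))\<^sup>2"
    using W_cases[of z c] by auto
qed

lemma pointwise_ineq:
  fixes X Y t :: real
  shows "t * (1 - t) * (X - Y)\<^sup>2 \<le> (1 - t) * X\<^sup>2 + t * Y\<^sup>2"
proof -
  have "(1 - t) * X\<^sup>2 + t * Y\<^sup>2 - t * (1 - t) * (X - Y)\<^sup>2 = ((1 - t) * X + t * Y)\<^sup>2"
    by (simp add: power2_eq_square algebra_simps)
  then show ?thesis by (metis diff_ge_0_iff_ge zero_le_power2)
qed

lemma F5:
  assumes f: "f \<in> L2 M"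
  shows "t * (1 - t) * Dw (\<lambda>z. 1 - W z) (blk c) \<le>
           (1 - t) * Dw (\<lambda>z. 1 - W z) f + t * Dw (\<lambda>z. 1 - W z) (\<lambda>x. f x - blk c x)"
proof -
  have h: "(\<lambda>x. f x - blk c x) \<in> L2 M"
  proof -
    have "integrable M (\<lambda>x. (f x)\<^sup>2 + (blk c x)\<^sup>2 - 2 * (f x * blk c x))"
      using L2D(2)[OF f] L2D(2)[OF blk_L2] L2_prod_int[OF f blk_L2] by simp
    then show ?thesis using L2D(1)[OF f] unfolding L2_def by (simp add: power2_diff algebra_simps)
  qed
  have i1: "integrable nu (\<lambda>z. (1 - W z) * (blk c (fst z) - blk c (snd z))\<^sup>2)"
    by (rule Dw_int[OF blk_L2]) (auto intro: W_bound')
  have i2: "integrable nu (\<lambda>z. (1 - W z) * (f (fst z) - f (snd z))\<^sup>2)"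
    by (rule Dw_int[OF f]) (auto intro: W_bound')
  have i3: "integrable nu (\<lambda>z. (1 - W z) * (f (fst z) - blk c (fst z) - (f (snd z) - blk c (snd z)))\<^sup>2)"
    using Dw_int[OF h, of "\<lambda>z. 1 - W z"] W_bound' by auto
  have "(\<integral>z. t * (1 - t) * ((1 - W z) * (blk c (fst z) - blk c (snd z))\<^sup>2) \<partial>nu) \<le>
        (\<integral>z. (1 - t) * ((1 - W z) * (f (fst z) - f (snd z))\<^sup>2)
            + t * ((1 - W z) * (f (fst z) - blk c (fst z) - (f (snd z) - blk c (snd z)))\<^sup>2) \<partial>nu)"
  proof (rule integral_mono)
    show "integrable nu (\<lambda>z. t * (1 - t) * ((1 - W z) * (blk c (fst z) - blk c (snd z))\<^sup>2))"
      using i1 by simp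
    show "integrable nu (\<lambda>z. (1 - t) * ((1 - W z) * (f (fst z) - f (snd z))\<^sup>2)
            + t * ((1 - W z) * (f (fst z) - blk c (fst z) - (f (snd z) - blk c (snd z)))\<^sup>2))"
      using i2 i3 by simp
    fix z assume z: "z \<in> space nu"
    have w: "0 \<le> 1 - W z" using W_le1[OF z] by simp
    have "(1 - W z) * (t * (1 - t) * (blk c (fst z) - blk c (snd z))\<^sup>2) \<le>
          (1 - W z) * ((1 - t) * (f (fst z) - f (snd z))\<^sup>2
            + t * (f (fst z) - blk c (fst z) - (f (snd z) - blk c (snd z)))\<^sup>2)"
      using pointwise_ineq[of t "f (fst z) - f (snd z)" "f (fst z) - blk c (fst z) - (f (snd z) - blk c (snd z))"]
      by (intro mult_left_mono w) (simp add: algebra_simps)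
    then show "t * (1 - t) * ((1 - W z) * (blk c (fst z) - blk c (snd z))\<^sup>2) \<le>
        (1 - t) * ((1 - W z) * (f (fst z) - f (snd z))\<^sup>2)
            + t * ((1 - W z) * (f (fst z) - blk c (fst z) - (f (snd z) - blk c (snd z)))\<^sup>2)"
      by (simp add: algebra_simps)
  qed
  then show ?thesis unfolding Dw_def using i2 i3 by simp
qed

definition sA :: "nat \<Rightarrow> ('a \<Rightarrow> real) \<Rightarrow> real" where
  "sA j F = (\<integral>x. indicator (A j) x * F x \<partial>M)"

lemma sum_sA:
  assumes F: "integrable M F" shows "integral\<^sup>L M F = (\<Sum>j<J. sA j F)"
proof -
  have "integral\<^sup>L M F = (\<integral>x. (\<Sum>j<J. indicator (A j) x * F x) \<partial>M)"
  proof (rule Bochner_Integration.integral_cong[OF refl])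
    fix x assume "x \<in> space M"
    then obtain i where i: "i < J" "x \<in> A i" using in_some by blast
    show "F x = (\<Sum>j<J. indicator (A j) x * F x)" using sum_ind[OF i, of "\<lambda>_. F x"] by simp
  qed
  also have "\<dots> = (\<Sum>j<J. sA j F)" unfolding sA_def
    using integrable_mult_indicator[OF A_in F] by (subst Bochner_Integration.integral_sum) auto
  finally show ?thesis .
qed

definition wj :: "nat \<Rightarrow> 'a \<times> 'a \<Rightarrow> real" where
  "wj j z = indicator (A j) (fst z) * indicator (A j) (snd z)"

lemma block_facts:
  assumes f: "f \<in> L2 M" and j: "j < J"
  shows "mu j * EE (uniform_measure M (A j)) (restrict_kernel M K (A j)) f = Dw (wj j) f / 2"
    "mu j * var_mu (uniform_measure M (A j)) f = sA j (\<lambda>x. (f x)\<^sup>2) - (sA j f)\<^sup>2 / mu j"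
    "gap (uniform_measure M (A j)) (restrict_kernel M K (A j)) * var_mu (uniform_measure M (A j)) f
       \<le> EE (uniform_measure M (A j)) (restrict_kernel M K (A j)) f"
    "0 \<le> var_mu (uniform_measure M (A j)) f"
    "0 \<le> gap (uniform_measure M (A j)) (restrict_kernel M K (A j))"
    "gap (uniform_measure M (A j)) (restrict_kernel M K (A j)) \<le> 1"
proof -
  interpret Bj: rblock M K "A j" by (rule rb[OF j])
  have mB: "Bj.mB = mu j" unfolding Bj.mB_def mu_def ..
  have fU: "f \<in> L2 (uniform_measure M (A j))" by (rule Bj.L2M_U[OF f])
  have "Bj.Qd f = Dw (wj j) f" unfolding Bj.Qd_def Dw_def wj_def ..
  then show "mu j * EE (uniform_measure M (A j)) (restrict_kernel M K (A j)) f = Dw (wj j) f / 2"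
    using Bj.Qd_formula[OF fU] mB by simp
  show "mu j * var_mu (uniform_measure M (A j)) f = sA j (\<lambda>x. (f x)\<^sup>2) - (sA j f)\<^sup>2 / mu j"
    using Bj.var_U[OF f] mB unfolding sA_def by simp
  have H: "\<And>g. g \<in> L2 (uniform_measure M (A j)) \<Longrightarrow> 0 \<le> EE (uniform_measure M (A j)) (restrict_kernel M K (A j)) g
       \<and> EE (uniform_measure M (A j)) (restrict_kernel M K (A j)) g \<le> var_mu (uniform_measure M (A j)) g"
    by (rule Bj.EE_U_bounds)
  note G = gap_props[of "uniform_measure M (A j)" "restrict_kernel M K (A j)"]
  show "gap (uniform_measure M (A j)) (restrict_kernel M K (A j)) * var_mu (uniform_measure M (A j)) f
       \<le> EE (uniform_measure M (A j)) (restrict_kernel M K (A j)) f" using G(4) H fU by blast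
  show "0 \<le> var_mu (uniform_measure M (A j)) f" using Bj.EE_U_bounds[OF fU] by linarith
  show "0 \<le> gap (uniform_measure M (A j)) (restrict_kernel M K (A j))" using G(1) H by blast
  show "gap (uniform_measure M (A j)) (restrict_kernel M K (A j)) \<le> 1" using G(2) H by blast
qed

lemma sum_Dw:
  assumes f: "f \<in> L2 M" shows "(\<Sum>j<J. Dw (wj j) f) = Dw W f"
proof -
  have [measurable]: "f \<in> borel_measurable M" using L2D[OF f] by simp
  have i: "integrable nu (\<lambda>z. wj j z * (f (fst z) - f (snd z))\<^sup>2)" if "j < J" for j
    by (rule Dw_int[OF f]) (auto simp: wj_def indicator_def that)
  have "Dw W f = (\<integral>z. (\<Sum>j<J. wj j z * (f (fst z) - f (snd z))\<^sup>2) \<partial>nu)"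
    unfolding Dw_def by (rule Bochner_Integration.integral_cong[OF refl]) (simp only: W_def wj_def sum_distrib_right)
  also have "\<dots> = (\<Sum>j<J. Dw (wj j) f)"
    unfolding Dw_def by (rule Bochner_Integration.integral_sum) (use i in auto)
  finally show ?thesis ..
qed

lemma h_L2: "f \<in> L2 M \<Longrightarrow> (\<lambda>x. f x - blk c x) \<in> L2 M"
proof -
  assume f: "f \<in> L2 M"
  have "integrable M (\<lambda>x. (f x)\<^sup>2 + (blk c x)\<^sup>2 - 2 * (f x * blk c x))"
    using L2D(2)[OF f] L2D(2)[OF blk_L2] L2_prod_int[OF f blk_L2] by simp
  then show ?thesis using L2D(1)[OF f] unfolding L2_def by (simp add: power2_diff algebra_simps)
qed

lemma Dw_nonneg: "(\<And>z. z \<in> space nu \<Longrightarrow> 0 \<le> w z) \<Longrightarrow> 0 \<le> Dw w f"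
  unfolding Dw_def by (intro Bochner_Integration.integral_nonneg) auto

lemma sA_shift:
  assumes f: "f \<in> L2 M" and j: "j < J"
  shows "sA j (\<lambda>x. (f x - blk c x)\<^sup>2) = sA j (\<lambda>x. (f x)\<^sup>2) - 2 * c j * sA j f + (c j)\<^sup>2 * mu j"
proof -
  have i1: "integrable M (\<lambda>x. indicator (A j) x * (f x)\<^sup>2)"
    using integrable_mult_indicator[OF A_in[OF j] L2D(2)[OF f]] by simp
  have i2: "integrable M (\<lambda>x. indicator (A j) x * f x)"
    using integrable_mult_indicator[OF A_in[OF j] L2_integrable[OF f]] by simp
  have i3: "integrable M (\<lambda>x. indicator (A j) x * (c j)\<^sup>2)" by (rule ind_const_int[OF j])
  have "sA j (\<lambda>x. (f x - blk c x)\<^sup>2) =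
     (\<integral>x. indicator (A j) x * (f x)\<^sup>2 - 2 * c j * (indicator (A j) x * f x) + indicator (A j) x * (c j)\<^sup>2 \<partial>M)"
    unfolding sA_def
  proof (rule Bochner_Integration.integral_cong[OF refl])
    fix x assume "x \<in> space M"
    show "indicator (A j) x * (f x - blk c x)\<^sup>2 =
      indicator (A j) x * (f x)\<^sup>2 - 2 * c j * (indicator (A j) x * f x) + indicator (A j) x * (c j)\<^sup>2"
      using blk_eq[OF j, of x c] by (cases "x \<in> A j") (auto simp: power2_diff)
  qed
  also have "\<dots> = sA j (\<lambda>x. (f x)\<^sup>2) - 2 * c j * sA j f + (c j)\<^sup>2 * mu j"
    using i1 i2 i3 int_ind_const[OF j, of "(c j)\<^sup>2"] unfolding sA_def by (simp add: mult.commute)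
  finally show ?thesis .
qed

lemma var_decomp:
  assumes f: "f \<in> L2 M"
  defines "m \<equiv> \<lambda>j. sA j f / mu j"
  shows "var_mu M f = (\<Sum>j<J. sA j (\<lambda>x. (f x)\<^sup>2) - (sA j f)\<^sup>2 / mu j) + var_mu (proj_measure M A J) m"
    "inner_mu M (\<lambda>x. f x - blk m x) (\<lambda>x. f x - blk m x) = (\<Sum>j<J. sA j (\<lambda>x. (f x)\<^sup>2) - (sA j f)\<^sup>2 / mu j)"
proof -
  have mu0: "j < J \<Longrightarrow> mu j \<noteq> 0" for j using mu_pos[of j] by simp
  have e1: "inner_mu M f f = (\<Sum>j<J. sA j (\<lambda>x. (f x)\<^sup>2))"
    unfolding inner_mu_def using sum_sA[OF L2D(2)[OF f]] by (simp add: power2_eq_square)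
  have e2: "integral\<^sup>L M f = (\<Sum>j<J. sA j f)" by (rule sum_sA[OF L2_integrable[OF f]])
  have e3: "var_mu (proj_measure M A J) m = (\<Sum>j<J. (sA j f)\<^sup>2 / mu j) - (\<Sum>j<J. sA j f)\<^sup>2"
  proof -
    have "var_mu (proj_measure M A J) m = (\<Sum>j<J. mu j * (m j * m j)) - (\<Sum>j<J. mu j * m j)\<^sup>2"
      unfolding var_pm unfolding var_mu_def inner_blk int_blk ..
    also have "(\<Sum>j<J. mu j * (m j * m j)) = (\<Sum>j<J. (sA j f)\<^sup>2 / mu j)"
      using mu0 by (intro sum.cong refl) (simp add: m_def power2_eq_square)
    also have "(\<Sum>j<J. mu j * m j) = (\<Sum>j<J. sA j f)"
      using mu0 by (intro sum.cong refl) (simp add: m_def)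
    finally show ?thesis .
  qed
  show "var_mu M f = (\<Sum>j<J. sA j (\<lambda>x. (f x)\<^sup>2) - (sA j f)\<^sup>2 / mu j) + var_mu (proj_measure M A J) m"
    unfolding e3 unfolding var_mu_def e1 e2 by (simp add: sum_subtractf)
  have hL: "(\<lambda>x. f x - blk m x) \<in> L2 M" by (rule h_L2[OF f])
  have "inner_mu M (\<lambda>x. f x - blk m x) (\<lambda>x. f x - blk m x) = (\<Sum>j<J. sA j (\<lambda>x. (f x - blk m x)\<^sup>2))"
    unfolding inner_mu_def using sum_sA[OF L2D(2)[OF hL]] by (simp add: power2_eq_square)
  also have "\<dots> = (\<Sum>j<J. sA j (\<lambda>x. (f x)\<^sup>2) - (sA j f)\<^sup>2 / mu j)"
  proof (rule sum.cong[OF refl])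
    fix j assume "j \<in> {..<J}"
    then have j: "j < J" by simp
    show "sA j (\<lambda>x. (f x - blk m x)\<^sup>2) = sA j (\<lambda>x. (f x)\<^sup>2) - (sA j f)\<^sup>2 / mu j"
      using sA_shift[OF f j, of m] mu0[OF j] by (simp add: m_def power2_eq_square field_simps)
  qed
  finally show "inner_mu M (\<lambda>x. f x - blk m x) (\<lambda>x. f x - blk m x) = (\<Sum>j<J. sA j (\<lambda>x. (f x)\<^sup>2) - (sA j f)\<^sup>2 / mu j)" .
qed

lemma J_pos: "0 < J"
proof -
  interpret P: prob_space M by (rule prob)
  obtain x where "x \<in> space M" using P.not_empty by blast
  then show ?thesis using in_some by fastforce
qed

lemma H_pm: "g \<in> L2 (proj_measure M A J) \<Longrightarrow>
   0 \<le> EE (proj_measure M A J) (proj_kernel M K A J) g \<and>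
   EE (proj_measure M A J) (proj_kernel M K A J) g \<le> var_mu (proj_measure M A J) g"
  unfolding EE_pm var_pm using Ef_nonneg[OF blk_L2] Ef_le_var[OF blk_L2] by blast

lemma H_M: "f \<in> L2 M \<Longrightarrow> 0 \<le> EE M K f \<and> EE M K f \<le> var_mu M f"
  using Ef_nonneg Ef_le_var unfolding Ef_def EE_def by blast

lemma lower_f:
  assumes f: "f \<in> L2 M"
  shows "gap (proj_measure M A J) (proj_kernel M K A J) / 2
           * Min ((\<lambda>j. gap (uniform_measure M (A j)) (restrict_kernel M K (A j))) ` {..<J}) * var_mu M f
         \<le> Ef f"
proof -
  define m where "m j = sA j f / mu j" for j
  define h where "h x = f x - blk m x" for x
  define gs where "gs j = gap (uniform_measure M (A j)) (restrict_kernel M K (A j))" for j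
  define g where "g = Min (gs ` {..<J})"
  define \<gamma> where "\<gamma> = gap (proj_measure M A J) (proj_kernel M K A J)"
  have fin: "finite (gs ` {..<J})" and ne: "gs ` {..<J} \<noteq> {}" using J_pos by auto
  have g_le: "j < J \<Longrightarrow> g \<le> gs j" for j unfolding g_def using fin by (intro Min_le) auto
  obtain j0 where j0: "j0 < J" "g = gs j0" using Min_in[OF fin ne] unfolding g_def by auto
  have g0: "0 \<le> g" and g1: "g \<le> 1" using block_facts(5,6)[OF f j0(1)] j0(2) unfolding gs_def by auto
  note Gpm = gap_props[of "proj_measure M A J" "proj_kernel M K A J"]
  have \<gamma>0: "0 \<le> \<gamma>" and \<gamma>1: "\<gamma> \<le> 1" using Gpm(1,2) H_pm unfolding \<gamma>_def by blast+
  define a where "a = (\<Sum>j<J. sA j (\<lambda>x. (f x)\<^sup>2) - (sA j f)\<^sup>2 / mu j)"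
  define b where "b = var_mu (proj_measure M A J) m"
  define e where "e = Dw W f / 2"
  define d where "d = Dw (\<lambda>z. 1 - W z) f / 2"
  define dh where "dh = Dw (\<lambda>z. 1 - W z) h / 2"
  define EG where "EG = Ef (blk m)"
  have hL: "h \<in> L2 M" unfolding h_def by (rule h_L2[OF f])
  have VD: "var_mu M f = a + b" "inner_mu M h h = a"
    using var_decomp[OF f] unfolding a_def b_def h_def m_def by simp_all
  have Eff: "Ef f = e + d" unfolding e_def d_def by (rule Ef_split[OF f])
  have d0: "0 \<le> d" unfolding d_def using Dw_nonneg[of "\<lambda>z. 1 - W z" f] W_le1 by force
  have dh0: "0 \<le> dh" unfolding dh_def using Dw_nonneg[of "\<lambda>z. 1 - W z" h] W_le1 by force
  have e0: "0 \<le> e" unfolding e_def using Dw_nonneg[of W f] W_nonneg by force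
  have F2: "e + dh \<le> a"
  proof -
    have "Ef h = Dw W h / 2 + dh" unfolding dh_def by (rule Ef_split[OF hL])
    also have "Dw W h = Dw W f" unfolding h_def by (rule Dw_W_diff)
    finally have "Ef h = e + dh" unfolding e_def .
    moreover have "Ef h \<le> var_mu M h" by (rule Ef_le_var[OF hL])
    moreover have "var_mu M h \<le> inner_mu M h h" unfolding var_mu_def by simp
    ultimately show ?thesis using VD(2) by linarith
  qed
  have F3: "\<gamma> * b \<le> EG"
    using Gpm(4)[of m] H_pm L2_pm unfolding \<gamma>_def b_def EG_def EE_pm by blast
  have F4: "g * a \<le> e"
  proof -
    have "e = (\<Sum>j<J. mu j * EE (uniform_measure M (A j)) (restrict_kernel M K (A j)) f)"
      unfolding e_def sum_Dw[OF f, symmetric] sum_divide_distrib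
      by (intro sum.cong refl) (simp add: block_facts(1)[OF f])
    moreover have "g * a = (\<Sum>j<J. g * (mu j * var_mu (uniform_measure M (A j)) f))"
      unfolding a_def sum_distrib_left by (intro sum.cong refl) (simp add: block_facts(2)[OF f])
    moreover have "g * (mu j * var_mu (uniform_measure M (A j)) f) \<le>
        mu j * EE (uniform_measure M (A j)) (restrict_kernel M K (A j)) f" if j: "j < J" for j
    proof -
      have v0: "0 \<le> mu j * var_mu (uniform_measure M (A j)) f"
        using mu_pos[OF j] block_facts(4)[OF f j] by simp
      have "g * (mu j * var_mu (uniform_measure M (A j)) f) \<le> gs j * (mu j * var_mu (uniform_measure M (A j)) f)"
        using g_le[OF j] v0 by (rule mult_right_mono)
      also have "\<dots> = mu j * (gs j * var_mu (uniform_measure M (A j)) f)" by simp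
      also have "\<dots> \<le> mu j * EE (uniform_measure M (A j)) (restrict_kernel M K (A j)) f"
        using block_facts(3)[OF f j] mu_pos[OF j] unfolding gs_def by (intro mult_left_mono) auto
      finally show ?thesis .
    qed
    ultimately show ?thesis by (metis (no_types, lifting) lessThan_iff sum_mono)
  qed
  have F5: "t * (1 - t) * EG \<le> (1 - t) * d + t * dh" for t
    using F5[OF f, of t m] unfolding EG_def Ef_blk d_def dh_def h_def by simp
  have "\<gamma> * g / 2 * (a + b) \<le> e + d"
    by (rule final_alg[OF \<gamma>0 \<gamma>1 g0 g1 d0 dh0 e0 F2 F3 F4 F5])
  moreover have "\<gamma> / 2 * g * (a + b) = \<gamma> * g / 2 * (a + b)" by simp
  ultimately have "\<gamma> / 2 * g * var_mu M f \<le> Ef f" unfolding VD(1) Eff by linarith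
  then show ?thesis unfolding \<gamma>_def g_def gs_def .
qed

end

theorem main_result:
  fixes M :: "'a measure" and K :: "'a \<Rightarrow> 'a measure"
    and A :: "nat \<Rightarrow> 'a set" and J :: nat
  assumes "prob_space M"
    and "countably_generated M"
    and "markov_kernel M K"
    and "reversible M K"
    and "nonneg_definite M K"
    and "\<forall>j<J. A j \<in> sets M"
    and "disjoint_family_on A {..<J}"
    and "(\<Union>j<J. A j) = space M"
    and "\<forall>j<J. measure M (A j) > 0"
  shows "gap (proj_measure M A J) (proj_kernel M K A J) / 2
           * Min ((\<lambda>j. gap (uniform_measure M (A j)) (restrict_kernel M K (A j))) ` {..<J})
         \<le> gap M K
       \<and> gap M K \<le> gap (proj_measure M A J) (proj_kernel M K A J)"
proof -
  have ch: "chain M K" using assms(1,3) by (rule chain.intro)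
  have rc: "rchain M K" using ch by (rule rchain.intro) (rule rchain_axioms.intro[OF assms(4,5)])
  have pt: "part M K A J" using rc by (rule part.intro) (rule part_axioms.intro[OF assms(6-9)])
  interpret part M K A J by (rule pt)
  have up: "gap M K \<le> gap (proj_measure M A J) (proj_kernel M K A J)"
  proof (rule gap_ge)
    show "gap M K \<le> 1" by (rule gap_props(2)) (erule H_M)
    fix g assume g: "g \<in> L2 (proj_measure M A J)" "0 < var_mu (proj_measure M A J) g"
    have "gap M K * var_mu M (blk g) \<le> EE M K (blk g)"
      by (rule gap_props(4)[of M K "blk g"]) (erule H_M, rule blk_L2)
    then show "gap M K * var_mu (proj_measure M A J) g \<le> EE (proj_measure M A J) (proj_kernel M K A J) g"
      unfolding EE_pm var_pm by (simp add: Ef_def EE_def)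
  qed
  define c where "c = gap (proj_measure M A J) (proj_kernel M K A J) / 2
           * Min ((\<lambda>j. gap (uniform_measure M (A j)) (restrict_kernel M K (A j))) ` {..<J})"
  have lo: "c \<le> gap M K"
  proof (rule gap_ge)
    have fin: "finite ((\<lambda>j. gap (uniform_measure M (A j)) (restrict_kernel M K (A j))) ` {..<J})"
      by simp
    have ne: "(\<lambda>j. gap (uniform_measure M (A j)) (restrict_kernel M K (A j))) ` {..<J} \<noteq> {}"
      using J_pos by auto
    obtain j0 where j0: "j0 < J" "Min ((\<lambda>j. gap (uniform_measure M (A j)) (restrict_kernel M K (A j))) ` {..<J})
        = gap (uniform_measure M (A j0)) (restrict_kernel M K (A j0))"
      using Min_in[OF fin ne] by auto
    have L2z: "(\<lambda>_. 0) \<in> L2 M" unfolding L2_def by simp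
    have g01: "0 \<le> Min ((\<lambda>j. gap (uniform_measure M (A j)) (restrict_kernel M K (A j))) ` {..<J})"
        "Min ((\<lambda>j. gap (uniform_measure M (A j)) (restrict_kernel M K (A j))) ` {..<J}) \<le> 1"
      using block_facts(5,6)[OF L2z j0(1)] unfolding j0(2) by simp_all
    have \<gamma>0: "0 \<le> gap (proj_measure M A J) (proj_kernel M K A J)"
      by (rule gap_props(1)) (erule H_pm)
    have \<gamma>1: "gap (proj_measure M A J) (proj_kernel M K A J) \<le> 1"
      by (rule gap_props(2)) (erule H_pm)
    have "c \<le> 1 / 2 * 1" unfolding c_def
      using g01 \<gamma>0 \<gamma>1 by (intro mult_mono) auto
    then show "c \<le> 1" by simp
    fix f assume f: "f \<in> L2 M" "0 < var_mu M f"
    show "c * var_mu M f \<le> EE M K f" using lower_f[OF f(1)] unfolding c_def Ef_def EE_def .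
  qed
  show ?thesis using up lo unfolding c_def by simp
qed


theorem theorem5p2:
  fixes M :: "'a measure" and K :: "'a \<Rightarrow> 'a measure"
    and A :: "nat \<Rightarrow> 'a set" and J :: nat
  assumes "prob_space M"
    and "countably_generated M"
    and "markov_kernel M K"
    and "reversible M K"
    and "nonneg_definite M K"
    and "\<forall>j<J. A j \<in> sets M"
    and "disjoint_family_on A {..<J}"
    and "(\<Union>j<J. A j) = space M"
    and "\<forall>j<J. measure M (A j) > 0"
  shows "gap (proj_measure M A J) (proj_kernel M K A J) / 2
           * Min ((\<lambda>j. gap (uniform_measure M (A j)) (restrict_kernel M K (A j))) ` {..<J})
         \<le> gap M K
       \<and> gap M K \<le> gap (proj_measure M A J) (proj_kernel M K A J)"
  using assms by (rule main_result)

end
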